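(* Let $D$ be a knot diagram. If some ineffective region set for $D$ has odd cardinality, then for every crossing $c$ of $D$ the crossing change at $c$ is realized by a finite sequence of region freeze crossing changes on $D$.
   Context: A knot diagram is a regular projection of a knot into the plane with over/under information at each crossing. Regions are the connected components of the complement of the projection; a crossing touches a region $R$ if it lies on the boundary of $R$. A region crossing change at $R$ changes every crossing touching $R$ (each once); a region freeze crossing change at $R$ changes every crossing not touching $R$ and leaves those touching $R$ unchanged. For a set $\mathcal{R}$ of distinct regions, region crossing changes about $\mathcal{R}$ means applying the region crossing change at each region of $\mathcal{R}$ once. A set $\mathcal{R}^{\ast}$ of regions is ineffective for $D$ if region crossing changes about $\mathcal{R}^{\ast}$ do not change $D$ in consequence (every crossing touches an even number of regions of $\mathcal{R}^{\ast}$). A sequence of local moves realizes the crossing change at a crossing $c$ if it produces the same diagram as changing the single crossing $c$ of $D$. *)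

theory Defs
  imports Main
begin

text \<open>A knot diagram (regular projection of a knot onto the sphere/plane, with
crossing information) is encoded combinatorially as a planar 4-regular map:
a finite set of darts Dt (half-edges), a rotation permutation s (cyclic order of
the four darts at a crossing) and a fixpoint-free edge involution a.  Planarity is expressed by connectedness plus Euler's formula
V - E + F = 2; the projection being a single closed curve (a knot) is expressed
by the straight-ahead walk (s o s o a) having exactly two orbits (the two
orientations of the single strand).\<close>

definition dorbit :: "('d \<Rightarrow> 'd) \<Rightarrow> 'd \<Rightarrow> 'd set" where
  "dorbit f x = {(f ^^ n) x | n. True}"

definition crossings :: "('d \<Rightarrow> 'd) \<Rightarrow> 'd set \<Rightarrow> 'd set set" where
  "crossings s Dt = dorbit s ` Dt"

definition edges :: "('d \<Rightarrow> 'd) \<Rightarrow> 'd set \<Rightarrow> 'd set set" where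
  "edges a Dt = dorbit a ` Dt"

definition regions :: "('d \<Rightarrow> 'd) \<Rightarrow> ('d \<Rightarrow> 'd) \<Rightarrow> 'd set \<Rightarrow> 'd set set" where
  "regions s a Dt = dorbit (s \<circ> a) ` Dt"

definition knot_projection :: "'d set \<Rightarrow> ('d \<Rightarrow> 'd) \<Rightarrow> ('d \<Rightarrow> 'd) \<Rightarrow> bool" where
  "knot_projection Dt s a \<longleftrightarrow>
     finite Dt \<and> Dt \<noteq> {} \<and>
     bij_betw s Dt Dt \<and> bij_betw a Dt Dt \<and>
     (\<forall>d\<in>Dt. a (a d) = d \<and> a d \<noteq> d) \<and>
     (\<forall>d\<in>Dt. card (dorbit s d) = 4) \<and>
     (\<forall>d\<in>Dt. \<forall>e\<in>Dt. (d, e) \<in> ({(x, s x) | x. x \<in> Dt} \<union> {(x, a x) | x. x \<in> Dt})\<^sup>*) \<and>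
     int (card (crossings s Dt)) - int (card (edges a Dt)) + int (card (regions s a Dt)) = 2 \<and>
     card (dorbit (s \<circ> s \<circ> a) ` Dt) = 2"

definition touches :: "'d set \<Rightarrow> 'd set \<Rightarrow> bool" where
  "touches c r \<longleftrightarrow> c \<inter> r \<noteq> {}"

text \<open>Over/under information: a boolean per crossing.  A diagram state is
ov :: 'd set \<Rightarrow> bool (only its values on crossings matter).\<close>

definition crossing_change :: "'d set \<Rightarrow> ('d set \<Rightarrow> bool) \<Rightarrow> ('d set \<Rightarrow> bool)" where
  "crossing_change c ov = ov(c := \<not> ov c)"

definition region_cc ::
  "('d \<Rightarrow> 'd) \<Rightarrow> 'd set \<Rightarrow> 'd set \<Rightarrow> ('d set \<Rightarrow> bool) \<Rightarrow> ('d set \<Rightarrow> bool)" where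
  "region_cc s Dt r ov = (\<lambda>v. if v \<in> crossings s Dt \<and> touches v r then \<not> ov v else ov v)"

definition region_freeze_cc ::
  "('d \<Rightarrow> 'd) \<Rightarrow> 'd set \<Rightarrow> 'd set \<Rightarrow> ('d set \<Rightarrow> bool) \<Rightarrow> ('d set \<Rightarrow> bool)" where
  "region_freeze_cc s Dt r ov = (\<lambda>v. if v \<in> crossings s Dt \<and> \<not> touches v r then \<not> ov v else ov v)"

definition ineffective ::
  "'d set \<Rightarrow> ('d \<Rightarrow> 'd) \<Rightarrow> ('d \<Rightarrow> 'd) \<Rightarrow> ('d set \<Rightarrow> bool) \<Rightarrow> 'd set set \<Rightarrow> bool" where
  "ineffective Dt s a ov Rs \<longleftrightarrow> Rs \<subseteq> regions s a Dt \<and>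
     (\<forall>rs. distinct rs \<and> set rs = Rs \<longrightarrow> fold (region_cc s Dt) rs ov = ov)"

end

theory Submission
  imports Defs
begin

definition xs :: "'a set \<Rightarrow> 'a set \<Rightarrow> 'a set" where
  "xs A B = (A - B) \<union> (B - A)"

lemma xs_iff[simp]: "x \<in> xs A B \<longleftrightarrow> (x \<in> A) \<noteq> (x \<in> B)"
  unfolding xs_def by auto

lemma funpow_inj_on:
  assumes "inj_on f D" "f ` D \<subseteq> D"
  shows "inj_on (f ^^ n) D"
proof (induction n)
  case 0 then show ?case by simp
next
  case (Suc n)
  have "inj_on ((f ^^ n) \<circ> f) D"
    by (rule comp_inj_on[OF assms(1) inj_on_subset[OF Suc assms(2)]])
  thus ?case by (simp only: funpow_Suc_right)
qed

lemma funpow_split: "i \<le> j \<Longrightarrow> (f ^^ j) x = (f ^^ i) ((f ^^ (j - i)) x)"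
proof -
  assume "i \<le> j"
  hence "j = i + (j - i)" by simp
  hence "(f ^^ j) x = (f ^^ (i + (j - i))) x" by simp
  also have "\<dots> = (f ^^ i) ((f ^^ (j - i)) x)" by (simp add: funpow_add)
  finally show ?thesis .
qed

locale perm_on =
  fixes D :: "'d set" and f :: "'d \<Rightarrow> 'd"
  assumes fin: "finite D" and bij: "bij_betw f D D"
begin

lemma f_in: "x \<in> D \<Longrightarrow> f x \<in> D"
  using bij by (auto simp: bij_betw_def)

lemma inj: "inj_on f D"
  using bij by (auto simp: bij_betw_def)

lemma fimg: "f ` D \<subseteq> D" using f_in by auto

lemma funpow_in: "x \<in> D \<Longrightarrow> (f ^^ n) x \<in> D"
  by (induction n) (auto simp: f_in)

lemma funpow_inj: "inj_on (f ^^ n) D"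
  by (rule funpow_inj_on[OF inj fimg])

lemma cancel:
  assumes x: "x \<in> D" and ij: "i \<le> j" and eq: "(f ^^ i) x = (f ^^ j) x"
  shows "(f ^^ (j - i)) x = x"
proof -
  have "(f ^^ i) x = (f ^^ i) ((f ^^ (j - i)) x)" using eq funpow_split[OF ij] by simp
  thus ?thesis using funpow_inj[of i] x funpow_in[OF x] unfolding inj_on_def by metis
qed

lemma period_ex:
  assumes x: "x \<in> D"
  shows "\<exists>m>0. (f ^^ m) x = x"
proof -
  let ?g = "\<lambda>n. (f ^^ n) x"
  have "?g ` {0..card D} \<subseteq> D" using funpow_in[OF x] by auto
  hence cle: "card (?g ` {0..card D}) \<le> card D" by (simp add: card_mono fin)
  have "\<not> inj_on ?g {0..card D}"
  proof (intro notI)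
    assume "inj_on ?g {0..card D}"
    hence "card (?g ` {0..card D}) = card {0..card D}" by (rule card_image)
    also have "\<dots> = Suc (card D)" by simp
    finally show False using cle by simp
  qed
  then obtain i j where ij: "i \<noteq> j" "?g i = ?g j"
    unfolding inj_on_def by auto
  show ?thesis
  proof (cases "i < j")
    case True
    thus ?thesis using cancel[OF x _ ij(2)] by (intro exI[of _ "j - i"]) auto
  next
    case False
    hence "j < i" using ij(1) by simp
    thus ?thesis using cancel[OF x _ ij(2)[symmetric]] by (intro exI[of _ "i - j"]) auto
  qed
qed

lemma funpow_mult_period: "(f ^^ m) x = x \<Longrightarrow> (f ^^ (m * k)) x = x"
  by (induction k) (auto simp: funpow_add)

lemma orbit_sub: "x \<in> D \<Longrightarrow> dorbit f x \<subseteq> D"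
  unfolding dorbit_def using funpow_in by auto

lemma orbit_finite: "x \<in> D \<Longrightarrow> finite (dorbit f x)"
  using finite_subset[OF orbit_sub fin] .

lemma self_in: "x \<in> dorbit f x"
  unfolding dorbit_def by (auto intro: exI[of _ 0])

lemma funpow_in_orbit: "(f ^^ n) x \<in> dorbit f x"
  unfolding dorbit_def by auto

lemma f_in_orbit: "y \<in> dorbit f x \<Longrightarrow> f y \<in> dorbit f x"
proof -
  assume "y \<in> dorbit f x"
  then obtain n where "y = (f ^^ n) x" unfolding dorbit_def by auto
  thus ?thesis using funpow_in_orbit[of "Suc n" x] by simp
qed

lemma orbit_trans: "y \<in> dorbit f x \<Longrightarrow> dorbit f y \<subseteq> dorbit f x"
proof
  fix z assume "y \<in> dorbit f x" "z \<in> dorbit f y"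
  then obtain i j where "y = (f ^^ i) x" "z = (f ^^ j) y" unfolding dorbit_def by auto
  hence "z = (f ^^ (j + i)) x" by (simp add: funpow_add)
  thus "z \<in> dorbit f x" by (simp add: funpow_in_orbit)
qed

lemma orbit_sym:
  assumes x: "x \<in> D" and y: "y \<in> dorbit f x"
  shows "x \<in> dorbit f y"
proof -
  obtain k where k: "y = (f ^^ k) x" using y unfolding dorbit_def by auto
  obtain m where m: "m > 0" "(f ^^ m) x = x" using period_ex[OF x] by auto
  have "k \<le> m * k" using mult_le_mono1[of 1 m k] m(1) by simp
  hence "m * (k + 1) \<ge> k" using trans_le_add2[of k "m*k" m] by simp
  hence e: "(m * (k + 1) - k) + k = m * (k+1)" by simp
  have "(f ^^ (m * (k + 1) - k)) y = (f ^^ ((m * (k + 1) - k) + k)) x"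
    unfolding k by (simp only: funpow_add o_apply)
  also have "\<dots> = (f ^^ (m * (k+1))) x" using e by simp
  also have "\<dots> = x" by (rule funpow_mult_period[OF m(2)])
  finally have "x = (f ^^ (m * (k + 1) - k)) y" by simp
  thus ?thesis by (simp add: funpow_in_orbit)
qed

lemma orbit_eq: "x \<in> D \<Longrightarrow> y \<in> dorbit f x \<Longrightarrow> dorbit f y = dorbit f x"
  using orbit_trans orbit_sym by blast

lemma closed_funpow: "f ` Y \<subseteq> Y \<Longrightarrow> x \<in> Y \<Longrightarrow> (f ^^ n) x \<in> Y"
  by (induction n) auto

lemma closed_orbit:
  assumes "f ` Y \<subseteq> Y" "x \<in> Y"
  shows "dorbit f x \<subseteq> Y"
  using closed_funpow[OF assms] unfolding dorbit_def by auto

lemma closed_inv: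
  assumes "f ` Y \<subseteq> Y" "x \<in> D" "f x \<in> Y"
  shows "x \<in> Y"
proof -
  have "f x \<in> dorbit f x" using f_in_orbit self_in by blast
  hence "x \<in> dorbit f (f x)" using orbit_sym assms(2) by blast
  thus ?thesis using closed_orbit[OF assms(1,3)] by blast
qed

lemma closed_iff:
  assumes "f ` Y \<subseteq> Y" "x \<in> D"
  shows "f x \<in> Y \<longleftrightarrow> x \<in> Y"
  using closed_inv assms by blast

lemma orbit_disj:
  assumes "x \<in> D" "y \<in> D" "dorbit f x \<noteq> dorbit f y"
  shows "dorbit f x \<inter> dorbit f y = {}"
proof (rule ccontr)
  assume "dorbit f x \<inter> dorbit f y \<noteq> {}"
  then obtain z where z: "z \<in> dorbit f x" "z \<in> dorbit f y" by auto
  have "dorbit f z = dorbit f x" by (rule orbit_eq[OF assms(1) z(1)])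
  moreover have "dorbit f z = dorbit f y" by (rule orbit_eq[OF assms(2) z(2)])
  ultimately show False using assms(3) by simp
qed

lemma orbit_closed_disjoint:
  assumes "f ` Y \<subseteq> Y" "x \<in> D" "x \<notin> Y"
  shows "dorbit f x \<inter> Y = {}"
proof (rule ccontr)
  assume "dorbit f x \<inter> Y \<noteq> {}"
  then obtain z where z: "z \<in> dorbit f x" "z \<in> Y" by auto
  have "x \<in> dorbit f z" using orbit_sym[OF assms(2) z(1)] .
  thus False using closed_orbit[OF assms(1) z(2)] assms(3) by auto
qed

lemma Union_orbits: "\<Union> (dorbit f ` D) = D"
  using orbit_sub self_in by blast

lemma card_closed:
  "card {Y. Y \<subseteq> D \<and> f ` Y \<subseteq> Y} = 2 ^ card (dorbit f ` D)"
proof -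
  let ?O = "dorbit f ` D"
  have sub: "S \<subseteq> T" if S: "S \<in> Pow ?O" and T: "T \<in> Pow ?O" and eq: "\<Union>S = \<Union>T" for S T
  proof
    fix Q assume O: "Q \<in> S"
    then obtain x where x: "x \<in> D" "Q = dorbit f x" using S by auto
    hence "x \<in> \<Union>T" using eq O self_in by blast
    then obtain O' where O': "O' \<in> T" "x \<in> O'" by auto
    then obtain y where y: "y \<in> D" "O' = dorbit f y" using T by auto
    have "dorbit f x = dorbit f y" using orbit_eq[OF y(1)] O' y(2) by simp
    thus "Q \<in> T" using O' x y by simp
  qed
  have "bij_betw Union (Pow ?O) {Y. Y \<subseteq> D \<and> f ` Y \<subseteq> Y}"
  proof (rule bij_betwI')
    fix S T assume S: "S \<in> Pow ?O" and T: "T \<in> Pow ?O"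
    show "(\<Union>S = \<Union>T) = (S = T)"
      using sub[OF S T] sub[OF T S] by blast
  next
    fix S assume S: "S \<in> Pow ?O"
    have "\<Union>S \<subseteq> D"
    proof
      fix y assume "y \<in> \<Union>S"
      then obtain Q where "Q \<in> S" "y \<in> Q" by auto
      then obtain x where "x \<in> D" "Q = dorbit f x" using S by auto
      thus "y \<in> D" using orbit_sub \<open>y \<in> Q\<close> by auto
    qed
    moreover have "f ` \<Union>S \<subseteq> \<Union>S"
    proof
      fix z assume "z \<in> f ` \<Union>S"
      then obtain y Q where "Q \<in> S" "y \<in> Q" "z = f y" by auto
      then obtain x where "x \<in> D" "Q = dorbit f x" using S by auto
      thus "z \<in> \<Union>S" using f_in_orbit \<open>y \<in> Q\<close> \<open>z = f y\<close> \<open>Q \<in> S\<close> by auto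
    qed
    ultimately show "\<Union>S \<in> {Y. Y \<subseteq> D \<and> f ` Y \<subseteq> Y}" by auto
  next
    fix Y assume Y: "Y \<in> {Y. Y \<subseteq> D \<and> f ` Y \<subseteq> Y}"
    show "\<exists>S\<in>Pow ?O. Y = \<Union>S"
      apply (rule bexI[of _ "dorbit f ` Y"])
      using Y closed_orbit self_in by auto
  qed
  hence "card {Y. Y \<subseteq> D \<and> f ` Y \<subseteq> Y} = card (Pow ?O)"
    by (simp add: bij_betw_same_card)
  also have "\<dots> = 2 ^ card ?O" using fin by (simp add: card_Pow)
  finally show ?thesis .
qed

lemma card_sum_orbits: "card D = (\<Sum>Q\<in>dorbit f ` D. card Q)"
proof -
  have "card (\<Union> (dorbit f ` D)) = (\<Sum>Q\<in>dorbit f ` D. card Q)"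
    apply (rule card_Union_disjoint)
    subgoal unfolding pairwise_def disjnt_def using orbit_disj by auto
    subgoal using orbit_finite by auto
    done
  thus ?thesis using Union_orbits by simp
qed

lemma orbit_enum:
  assumes x: "x \<in> D"
  shows "\<exists>L>0. (f ^^ L) x = x \<and> inj_on (\<lambda>j. (f ^^ j) x) {..<L}
           \<and> dorbit f x = (\<lambda>j. (f ^^ j) x) ` {..<L}"
proof -
  define L where "L = (LEAST m. m > 0 \<and> (f ^^ m) x = x)"
  have L: "L > 0" "(f ^^ L) x = x"
    using LeastI_ex[OF period_ex[OF x]] unfolding L_def by auto
  have Lmin: "\<And>m. 0 < m \<Longrightarrow> m < L \<Longrightarrow> (f ^^ m) x \<noteq> x"
    using not_less_Least unfolding L_def by blast
  have noeq: False if ij: "i < L" "j < L" "(f ^^ i) x = (f ^^ j) x" "i < j" for i j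
  proof -
    have "(f ^^ (j - i)) x = x" using cancel[OF x _ ij(3)] ij(4) by simp
    thus False using Lmin[of "j - i"] ij by simp
  qed
  have inj: "inj_on (\<lambda>j. (f ^^ j) x) {..<L}"
  proof (rule inj_onI)
    fix i j assume ij: "i \<in> {..<L}" "j \<in> {..<L}" "(f ^^ i) x = (f ^^ j) x"
    show "i = j"
    proof (rule ccontr)
      assume "i \<noteq> j"
      hence "i < j \<or> j < i" by auto
      thus False using noeq[of i j] noeq[of j i] ij by auto
    qed
  qed
  have "dorbit f x = (\<lambda>j. (f ^^ j) x) ` {..<L}"
  proof
    show "(\<lambda>j. (f ^^ j) x) ` {..<L} \<subseteq> dorbit f x" using funpow_in_orbit by auto
    show "dorbit f x \<subseteq> (\<lambda>j. (f ^^ j) x) ` {..<L}"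
    proof
      fix y assume "y \<in> dorbit f x"
      then obtain n where n: "y = (f ^^ n) x" unfolding dorbit_def by auto
      have nd: "n = n mod L + L * (n div L)" by simp
      have "(f ^^ n) x = (f ^^ (n mod L + L * (n div L))) x" using nd by metis
      also have "\<dots> = (f ^^ (n mod L)) ((f ^^ (L * (n div L))) x)" by (simp only: funpow_add o_apply)
      also have "\<dots> = (f ^^ (n mod L)) x" using funpow_mult_period[OF L(2)] by simp
      finally show "y \<in> (\<lambda>j. (f ^^ j) x) ` {..<L}" using n L(1) by auto
    qed
  qed
  thus ?thesis using L inj by auto
qed

end


lemma xs_self[simp]: "xs A A = {}" by (auto simp: xs_def)
lemma xs_empty[simp]: "xs A {} = A" "xs {} A = A" by (auto simp: xs_def)
lemma xs_comm: "xs A B = xs B A" by (auto simp: xs_def)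
lemma xs_assoc: "xs (xs A B) C = xs A (xs B C)" by (auto simp: xs_def)
lemma xs_cancel[simp]: "xs (xs A C) C = A" by (auto simp: xs_def)
lemma xs_cancel2[simp]: "xs C (xs C A) = A" by (auto simp: xs_def)

lemma card_xs_parity:
  assumes "finite A" "finite B"
  shows "odd (card (xs A B)) \<longleftrightarrow> (odd (card A) \<noteq> odd (card B))"
proof -
  have u: "card (A \<union> B) + card (A \<inter> B) = card A + card B"
    using card_Un_Int[OF assms] by simp
  have "xs A B = (A \<union> B) - (A \<inter> B)" by (auto simp: xs_def)
  hence "card (xs A B) = card (A \<union> B) - card (A \<inter> B)"
    using card_Diff_subset[of "A \<inter> B" "A \<union> B"] assms by auto
  moreover have "card (A \<inter> B) \<le> card (A \<union> B)" using assms by (intro card_mono) auto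
  ultimately have "card (xs A B) + 2 * card (A \<inter> B) = card A + card B" using u by simp
  thus ?thesis by (metis dvd_add_times_triv_right_iff even_add mult_2 mult_2_right)
qed

lemma fib_card:
  assumes cl: "\<And>A B. A \<in> G \<Longrightarrow> B \<in> G \<Longrightarrow> xs A B \<in> G"
    and lin: "\<And>A B. A \<in> G \<Longrightarrow> B \<in> G \<Longrightarrow> h (xs A B) = xs (h A) (h B)"
    and A0: "A0 \<in> G"
  shows "card {A\<in>G. h A = h A0} = card {A\<in>G. h A = {}}"
proof -
  have "bij_betw (\<lambda>A. xs A A0) {A\<in>G. h A = h A0} {A\<in>G. h A = {}}"
  proof (rule bij_betwI')
    fix A B assume "A \<in> {A\<in>G. h A = h A0}" "B \<in> {A\<in>G. h A = h A0}"
    show "(xs A A0 = xs B A0) = (A = B)" by (metis xs_cancel)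
  next
    fix A assume "A \<in> {A\<in>G. h A = h A0}"
    thus "xs A A0 \<in> {A\<in>G. h A = {}}" using cl lin A0 by auto
  next
    fix B assume B: "B \<in> {A\<in>G. h A = {}}"
    show "\<exists>A\<in>{A\<in>G. h A = h A0}. B = xs A A0"
      apply (rule bexI[of _ "xs B A0"])
      using B cl lin A0 by auto
  qed
  thus ?thesis by (rule bij_betw_same_card)
qed

lemma hom_card:
  assumes fin: "finite G"
    and cl: "\<And>A B. A \<in> G \<Longrightarrow> B \<in> G \<Longrightarrow> xs A B \<in> G"
    and lin: "\<And>A B. A \<in> G \<Longrightarrow> B \<in> G \<Longrightarrow> h (xs A B) = xs (h A) (h B)"
  shows "card G = card (h ` G) * card {A\<in>G. h A = {}}"
proof -
  have G: "G = (\<Union>y\<in>h ` G. {A\<in>G. h A = y})" by auto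
  have "card G = (\<Sum>y\<in>h ` G. card {A\<in>G. h A = y})"
    apply (subst G, rule card_UN_disjoint)
    using fin by auto
  also have "\<dots> = (\<Sum>y\<in>h ` G. card {A\<in>G. h A = {}})"
  proof (rule sum.cong)
    fix y assume "y \<in> h ` G"
    then obtain A0 where "A0 \<in> G" "y = h A0" by auto
    thus "card {A\<in>G. h A = y} = card {A\<in>G. h A = {}}" using fib_card[OF cl lin] by auto
  qed simp
  finally show ?thesis by simp
qed

lemma preimage_card:
  assumes fin: "finite G"
    and cl: "\<And>A B. A \<in> G \<Longrightarrow> B \<in> G \<Longrightarrow> xs A B \<in> G"
    and lin: "\<And>A B. A \<in> G \<Longrightarrow> B \<in> G \<Longrightarrow> h (xs A B) = xs (h A) (h B)"
    and T: "finite T"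
  shows "card {A\<in>G. h A \<in> T} \<le> card T * card {A\<in>G. h A = {}}"
proof -
  have G: "{A\<in>G. h A \<in> T} = (\<Union>y\<in>T \<inter> h ` G. {A\<in>G. h A = y})" by auto
  have "card {A\<in>G. h A \<in> T} = (\<Sum>y\<in>T \<inter> h ` G. card {A\<in>G. h A = y})"
    apply (subst G, rule card_UN_disjoint)
    using fin T by auto
  also have "\<dots> = (\<Sum>y\<in>T \<inter> h ` G. card {A\<in>G. h A = {}})"
  proof (rule sum.cong)
    fix y assume "y \<in> T \<inter> h ` G"
    then obtain A0 where "A0 \<in> G" "y = h A0" by auto
    thus "card {A\<in>G. h A = y} = card {A\<in>G. h A = {}}" using fib_card[OF cl lin] by auto
  qed simp
  also have "\<dots> = card (T \<inter> h ` G) * card {A\<in>G. h A = {}}" by simp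
  also have "\<dots> \<le> card T * card {A\<in>G. h A = {}}"
    using T by (intro mult_le_mono1 card_mono) auto
  finally show ?thesis .
qed

lemma card4:
  assumes "distinct [x0, x1, x2, x3]"
  shows "card ({x0, x1, x2, x3} \<inter> K) =
     of_bool (x0 \<in> K) + of_bool (x1 \<in> K) + of_bool (x2 \<in> K) + of_bool (x3 \<in> K)"
  using assms by (cases "x0 \<in> K"; cases "x1 \<in> K"; cases "x2 \<in> K"; cases "x3 \<in> K")
    (auto simp: card_insert_if Int_insert_left)


locale knot =
  fixes Dt :: "'d set" and s a :: "'d \<Rightarrow> 'd"
  assumes kp: "knot_projection Dt s a"
begin

lemma fin: "finite Dt" using kp unfolding knot_projection_def by blast
lemma ne: "Dt \<noteq> {}" using kp unfolding knot_projection_def by blast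
lemma bs: "bij_betw s Dt Dt" using kp unfolding knot_projection_def by blast
lemma ba: "bij_betw a Dt Dt" using kp unfolding knot_projection_def by blast
lemma aa: "d \<in> Dt \<Longrightarrow> a (a d) = d" using kp unfolding knot_projection_def by blast
lemma afix: "d \<in> Dt \<Longrightarrow> a d \<noteq> d" using kp unfolding knot_projection_def by blast
lemma c4: "d \<in> Dt \<Longrightarrow> card (dorbit s d) = 4" using kp unfolding knot_projection_def by blast
lemma conn: "d \<in> Dt \<Longrightarrow> e \<in> Dt \<Longrightarrow>
   (d, e) \<in> ({(x, s x) | x. x \<in> Dt} \<union> {(x, a x) | x. x \<in> Dt})\<^sup>*"
  using kp unfolding knot_projection_def by blast
lemma euler: "int (card (crossings s Dt)) - int (card (edges a Dt)) + int (card (regions s a Dt)) = 2"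
  using kp unfolding knot_projection_def by blast
lemma two: "card (dorbit (s \<circ> s \<circ> a) ` Dt) = 2"
  using kp unfolding knot_projection_def by blast

lemma bphi: "bij_betw (s \<circ> a) Dt Dt" by (rule bij_betw_trans[OF ba bs])
lemma bsig: "bij_betw (s \<circ> s \<circ> a) Dt Dt" using bij_betw_trans[OF bphi bs] by (simp add: o_assoc)
  
sublocale S: perm_on Dt s by unfold_locales (rule fin, rule bs)
sublocale A: perm_on Dt a by unfold_locales (rule fin, rule ba)
sublocale F: perm_on Dt "s \<circ> a" by unfold_locales (rule fin, rule bphi)
sublocale G: perm_on Dt "s \<circ> s \<circ> a" by unfold_locales (rule fin, rule bsig)

lemma s_in: "d \<in> Dt \<Longrightarrow> s d \<in> Dt" by (rule S.f_in)
lemma a_in: "d \<in> Dt \<Longrightarrow> a d \<in> Dt" by (rule A.f_in)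

lemma s4:
  assumes d: "d \<in> Dt"
  shows "s (s (s (s d))) = d" "distinct [d, s d, s (s d), s (s (s d))]"
        "dorbit s d = {d, s d, s (s d), s (s (s d))}"
proof -
  obtain L where L: "L > 0" "(s ^^ L) d = d" "inj_on (\<lambda>j. (s ^^ j) d) {..<L}"
     "dorbit s d = (\<lambda>j. (s ^^ j) d) ` {..<L}"
    using S.orbit_enum[OF d] by blast
  have "card (dorbit s d) = L" using L(3,4) by (simp add: card_image)
  hence L4: "L = 4" using c4[OF d] by simp
  have l4: "{..<(4::nat)} = {0,1,2,3}" by auto
  show "s (s (s (s d))) = d" using L(2) L4 by (simp add: numeral_eq_Suc)
  show "dorbit s d = {d, s d, s (s d), s (s (s d))}" using L(4) L4 l4 by (simp add: numeral_eq_Suc)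
  have "distinct (map (\<lambda>j. (s ^^ j) d) [0,1,2,3])"
    using L(3) L4 l4 by (intro distinct_map[THEN iffD2]) auto
  thus "distinct [d, s d, s (s d), s (s (s d))]" by (simp add: numeral_eq_Suc)
qed

abbreviation "V \<equiv> crossings s Dt"
abbreviation "R \<equiv> regions s a Dt"
abbreviation "E \<equiv> edges a Dt"
abbreviation "fc \<equiv> dorbit (s \<circ> a)"
abbreviation "vx \<equiv> dorbit s"

lemma V_def': "V = vx ` Dt" unfolding crossings_def ..
lemma R_def': "R = fc ` Dt" unfolding regions_def ..

lemma vx_in: "d \<in> Dt \<Longrightarrow> vx d \<in> V" unfolding crossings_def by auto

lemma mem_V: "v \<in> V \<Longrightarrow> d \<in> v \<Longrightarrow> v = vx d"
  unfolding crossings_def using S.orbit_eq by auto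

lemma V_sub: "v \<in> V \<Longrightarrow> v \<subseteq> Dt" unfolding crossings_def using S.orbit_sub by auto
lemma V_fin: "v \<in> V \<Longrightarrow> finite v" using V_sub fin finite_subset by blast
lemma V_finite: "finite V" unfolding crossings_def using fin by simp
lemma R_finite: "finite R" unfolding regions_def using fin by simp

lemma card_Dt_V: "card Dt = 4 * card V"
proof -
  have "card Dt = (\<Sum>Q\<in>vx ` Dt. card Q)" by (rule S.card_sum_orbits)
  also have "\<dots> = (\<Sum>Q\<in>vx ` Dt. 4)" using c4 by (intro sum.cong) auto
  finally show ?thesis unfolding crossings_def by simp
qed

lemma a_orbit: "d \<in> Dt \<Longrightarrow> dorbit a d = {d, a d}"
proof -
  assume d: "d \<in> Dt"
  have "(a ^^ n) d \<in> {d, a d}" for n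
    by (induction n) (use aa[OF d] in auto)
  moreover have "a d \<in> dorbit a d" using A.f_in_orbit A.self_in by blast
  ultimately show ?thesis using A.self_in unfolding dorbit_def by auto
qed

lemma card_Dt_E: "card Dt = 2 * card E"
proof -
  have "card Dt = (\<Sum>Q\<in>dorbit a ` Dt. card Q)" by (rule A.card_sum_orbits)
  also have "\<dots> = (\<Sum>Q\<in>dorbit a ` Dt. 2)"
  proof (rule sum.cong)
    fix Q assume "Q \<in> dorbit a ` Dt"
    then obtain d where d: "d \<in> Dt" "Q = dorbit a d" by auto
    thus "card Q = 2" using a_orbit[OF d(1)] afix[OF d(1)] by simp
  qed simp
  finally show ?thesis unfolding edges_def by simp
qed

lemma RV: "card R = card V + 2"
  using euler card_Dt_V card_Dt_E by simp

definition P where "P = {Y. Y \<subseteq> Dt \<and> (s \<circ> a) ` Y \<subseteq> Y}"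
definition A1 where "A1 = {K. K \<subseteq> Dt \<and> a ` K \<subseteq> K}"
definition bnd where "bnd Y = {d\<in>Dt. (d \<in> Y) \<noteq> (a d \<in> Y)}"
definition bd0 where "bd0 K = {v \<in> V. odd (card (K \<inter> v))}"

lemma P_card: "card P = 2 ^ card R"
  unfolding P_def regions_def by (rule F.card_closed)
lemma A1_card: "card A1 = 2 ^ card E"
  unfolding A1_def edges_def by (rule A.card_closed)
lemma P_fin: "finite P" unfolding P_def using fin by simp
lemma A1_fin: "finite A1" unfolding A1_def using fin by simp

lemma P_sub: "Y \<in> P \<Longrightarrow> Y \<subseteq> Dt" unfolding P_def by auto
lemma P_cl: "Y \<in> P \<Longrightarrow> d \<in> Dt \<Longrightarrow> (s (a d) \<in> Y) = (d \<in> Y)"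
  unfolding P_def using F.closed_iff[of _ d] by auto

lemma P_xs: "Y \<in> P \<Longrightarrow> Z \<in> P \<Longrightarrow> xs Y Z \<in> P"
  unfolding P_def using F.closed_iff by (auto simp: image_subset_iff) blast+

lemma A1_xs: "Y \<in> A1 \<Longrightarrow> Z \<in> A1 \<Longrightarrow> xs Y Z \<in> A1"
  unfolding A1_def using A.closed_iff by (auto simp: image_subset_iff) blast+

lemma P_empty: "{} \<in> P" unfolding P_def by auto
lemma P_Dt: "Dt \<in> P" unfolding P_def using F.f_in by auto
lemma P_compl: "Y \<in> P \<Longrightarrow> Dt - Y \<in> P"
  unfolding P_def using F.closed_iff F.f_in by auto

lemma P_aS: "Y \<in> P \<Longrightarrow> d \<in> Dt \<Longrightarrow> (a d \<in> Y) = (s d \<in> Y)"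
  using P_cl[of Y "a d"] aa a_in by simp

lemma P_face: "Y \<in> P \<Longrightarrow> d \<in> Dt \<Longrightarrow> e \<in> Dt \<Longrightarrow> fc d = fc e \<Longrightarrow> (d \<in> Y) = (e \<in> Y)"
proof -
  assume Y: "Y \<in> P" and d: "d \<in> Dt" and e: "e \<in> Dt" and eq: "fc d = fc e"
  have cl: "(s \<circ> a) ` Y \<subseteq> Y" using Y unfolding P_def by auto
  show ?thesis
    using F.closed_orbit[OF cl, of d] F.closed_orbit[OF cl, of e] F.self_in[of d] F.self_in[of e] eq
    by auto
qed

lemma bnd_lin: "bnd (xs Y Z) = xs (bnd Y) (bnd Z)"
  unfolding bnd_def by auto

lemma bnd_A1: "bnd Y \<in> A1"
  unfolding bnd_def A1_def using aa a_in by auto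

lemma flip: "Y \<in> P \<Longrightarrow> d \<in> Dt \<Longrightarrow> (d \<in> bnd Y) = ((d \<in> Y) \<noteq> (s d \<in> Y))"
  unfolding bnd_def using P_aS by auto

lemma vx_eq: "d \<in> Dt \<Longrightarrow> vx d = {d, s d, s (s d), s (s (s d))}" by (rule s4(3))

lemma bnd_even: assumes Y: "Y \<in> P" shows "bd0 (bnd Y) = {}"
proof -
  { fix v assume v: "v \<in> V"
    then obtain d where d: "d \<in> Dt" "v = vx d" unfolding crossings_def by auto
    have ds: "s d \<in> Dt" "s (s d) \<in> Dt" "s (s (s d)) \<in> Dt" using d s_in by auto
    have "card (bnd Y \<inter> v) = card ({d, s d, s (s d), s (s (s d))} \<inter> bnd Y)"
      using d vx_eq by (simp add: Int_commute)
    also have "\<dots> = of_bool (d \<in> bnd Y) + of_bool (s d \<in> bnd Y) + of_bool (s (s d) \<in> bnd Y)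
        + of_bool (s (s (s d)) \<in> bnd Y)" by (rule card4[OF s4(2)[OF d(1)]])
    finally have "even (card (bnd Y \<inter> v))"
      using flip[OF Y d(1)] flip[OF Y ds(1)] flip[OF Y ds(2)] flip[OF Y ds(3)] s4(1)[OF d(1)]
      by (cases "d \<in> Y"; cases "s d \<in> Y"; cases "s (s d) \<in> Y"; cases "s (s (s d)) \<in> Y") auto }
  thus ?thesis unfolding bd0_def by auto
qed

lemma conn_closed:
  assumes cl: "s ` Y \<subseteq> Y" "a ` Y \<subseteq> Y" and d: "d \<in> Y" "d \<in> Dt" and e: "e \<in> Dt"
  shows "e \<in> Y"
proof -
  have "(d, e) \<in> ({(x, s x) | x. x \<in> Dt} \<union> {(x, a x) | x. x \<in> Dt})\<^sup>*" using conn d e by blast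
  thus ?thesis
    by (induction rule: rtrancl_induct) (use d cl in auto)
qed

lemma bnd_ker: assumes Y: "Y \<in> P" "bnd Y = {}" shows "Y = {} \<or> Y = Dt"
proof (cases "Y = {}")
  case False
  then obtain d where d: "d \<in> Y" by auto
  have sub: "Y \<subseteq> Dt" using Y P_sub by auto
  have ca: "a ` Y \<subseteq> Y" using Y sub unfolding bnd_def by auto
  have cs: "s ` Y \<subseteq> Y" using ca P_aS[OF Y(1)] sub by auto
  have "Dt \<subseteq> Y" using conn_closed[OF cs ca d] sub d by auto
  thus ?thesis using sub by auto
qed simp

lemma bd0_lin: "K \<subseteq> Dt \<Longrightarrow> L \<subseteq> Dt \<Longrightarrow> bd0 (xs K L) = xs (bd0 K) (bd0 L)"
proof -
  assume K: "K \<subseteq> Dt" and L: "L \<subseteq> Dt"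
  have key: "odd (card (xs K L \<inter> v)) = (odd (card (K \<inter> v)) \<noteq> odd (card (L \<inter> v)))"
    if v: "v \<in> V" for v
  proof -
    have "xs K L \<inter> v = xs (K \<inter> v) (L \<inter> v)" by auto
    thus ?thesis using card_xs_parity[of "K \<inter> v" "L \<inter> v"] V_fin[OF v] by simp
  qed
  show ?thesis
  proof (rule set_eqI)
    fix x show "x \<in> bd0 (xs K L) \<longleftrightarrow> x \<in> xs (bd0 K) (bd0 L)"
      unfolding bd0_def by (cases "x \<in> V") (simp_all add: key)
  qed
qed

lemma A1_sub: "K \<in> A1 \<Longrightarrow> K \<subseteq> Dt" unfolding A1_def by auto

lemma img_xs: "S \<in> bd0 ` A1 \<Longrightarrow> T \<in> bd0 ` A1 \<Longrightarrow> xs S T \<in> bd0 ` A1"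
proof -
  assume "S \<in> bd0 ` A1" "T \<in> bd0 ` A1"
  then obtain K L where KL: "K \<in> A1" "L \<in> A1" "S = bd0 K" "T = bd0 L" by auto
  hence "xs S T = bd0 (xs K L)" using bd0_lin A1_sub by auto
  thus ?thesis using A1_xs[OF KL(1,2)] by auto
qed

lemma A1_empty: "{} \<in> A1" unfolding A1_def by auto
lemma bd0_empty: "bd0 {} = {}" unfolding bd0_def by auto

lemma pair_img:
  assumes d: "d \<in> Dt" and e: "e \<in> Dt"
  shows "xs {vx d} {vx e} \<in> bd0 ` A1"
proof -
  have "(d, e) \<in> ({(x, s x) | x. x \<in> Dt} \<union> {(x, a x) | x. x \<in> Dt})\<^sup>*" using conn d e by blast
  thus ?thesis
  proof (induction rule: rtrancl_induct)
    case base
    show ?case using A1_empty bd0_empty by (metis image_eqI xs_self)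
  next
    case (step y z)
    have yD: "y \<in> Dt" using step(2) by auto
    have "xs {vx y} {vx z} \<in> bd0 ` A1"
    proof (cases "z = s y")
      case True
      have "vx z = vx y" using True S.orbit_eq[OF yD] S.f_in_orbit[OF S.self_in] by simp
      thus ?thesis using A1_empty bd0_empty by (metis image_eqI xs_self)
    next
      case False
      hence z: "z = a y" using step(2) by auto
      let ?K = "{y, a y}"
      have K: "?K \<in> A1" unfolding A1_def using yD a_in aa by auto
      have "bd0 ?K = xs {vx y} {vx z}"
      proof
        show "bd0 ?K \<subseteq> xs {vx y} {vx z}"
        proof
          fix v assume v: "v \<in> bd0 ?K"
          hence vV: "v \<in> V" and od: "odd (card (?K \<inter> v))" unfolding bd0_def by auto
          have "?K \<inter> v \<noteq> {}" using od by (metis card.empty odd_card_imp_not_empty)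
          have y1: "y \<in> v \<longleftrightarrow> v = vx y" using mem_V[OF vV] S.self_in by auto
          have y2: "a y \<in> v \<longleftrightarrow> v = vx (a y)" using mem_V[OF vV] S.self_in by auto
          have "\<not> (y \<in> v \<and> a y \<in> v)"
          proof
            assume "y \<in> v \<and> a y \<in> v"
            hence "?K \<inter> v = {y, a y}" by auto
            thus False using od afix[OF yD] by simp
          qed
          thus "v \<in> xs {vx y} {vx z}" using \<open>?K \<inter> v \<noteq> {}\<close> y1 y2 z by auto
        qed
      next
        show "xs {vx y} {vx z} \<subseteq> bd0 ?K"
        proof
          fix v assume v: "v \<in> xs {vx y} {vx z}"
          have vV: "v \<in> V" using v vx_in yD a_in z by auto
          have y1: "y \<in> v \<longleftrightarrow> v = vx y" using mem_V[OF vV] S.self_in by auto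
          have y2: "a y \<in> v \<longleftrightarrow> v = vx (a y)" using mem_V[OF vV] S.self_in by auto
          have "?K \<inter> v = {y} \<or> ?K \<inter> v = {a y}" using v y1 y2 z by auto
          thus "v \<in> bd0 ?K" unfolding bd0_def using vV by auto
        qed
      qed
      thus ?thesis using K by auto
    qed
    hence "xs (xs {vx d} {vx y}) (xs {vx y} {vx z}) \<in> bd0 ` A1"
      using img_xs step(3) by blast
    thus ?case by (simp add: xs_assoc)
  qed
qed

lemma even_img:
  "S \<subseteq> V \<Longrightarrow> even (card S) \<Longrightarrow> S \<in> bd0 ` A1"
proof (induction "card S" arbitrary: S rule: less_induct)
  case less
  show ?case
  proof (cases "S = {}")
    case True
    thus ?thesis using A1_empty bd0_empty by (metis image_eqI)
  next
    case False
    have fS: "finite S" using less(2) V_finite finite_subset by blast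
    obtain u where u: "u \<in> S" using False by auto
    have "card S \<noteq> 1" using less(3) by auto
    have "S - {u} \<noteq> {}"
    proof
      assume "S - {u} = {}"
      hence "S = {u}" using u by auto
      thus False using \<open>card S \<noteq> 1\<close> by simp
    qed
    then obtain w where w: "w \<in> S" "w \<noteq> u" by auto
    let ?S' = "S - {u, w}"
    have cS': "card ?S' = card S - 2" using u w fS by (simp add: card_Diff_subset)
    have "{u, w} \<subseteq> S" using u w by auto
    hence "card {u, w} \<le> card S" using fS by (rule card_mono[rotated])
    hence "card S \<ge> 2" using w by simp
    hence "card ?S' < card S" "even (card ?S')" using cS' less(3) by auto
    hence IH: "?S' \<in> bd0 ` A1" using less(1)[of ?S'] less(2) by auto
    obtain d e where de: "d \<in> Dt" "u = vx d" "e \<in> Dt" "w = vx e"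
      using u w less(2) unfolding crossings_def by blast
    have "xs {u} {w} \<in> bd0 ` A1" using pair_img de by simp
    hence "xs ?S' (xs {u} {w}) \<in> bd0 ` A1" by (rule img_xs[OF IH])
    moreover have "xs ?S' (xs {u} {w}) = S" using u w by (auto simp: xs_def)
    ultimately show ?thesis by simp
  qed
qed

lemma img_card: "2 ^ card V \<le> 2 * card (bd0 ` A1)"
proof -
  obtain d0 where d0: "d0 \<in> Dt" using ne by auto
  let ?v0 = "vx d0"
  have v0: "?v0 \<in> V" using vx_in[OF d0] .
  let ?I = "bd0 ` A1"
  have "Pow V \<subseteq> ?I \<union> (\<lambda>T. xs T {?v0}) ` ?I"
  proof
    fix S assume S: "S \<in> Pow V"
    have fS: "finite S" using S V_finite finite_subset by auto
    show "S \<in> ?I \<union> (\<lambda>T. xs T {?v0}) ` ?I"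
    proof (cases "even (card S)")
      case True thus ?thesis using even_img S by auto
    next
      case False
      let ?T = "xs S {?v0}"
      have "even (card ?T)" using card_xs_parity[OF fS, of "{?v0}"] False by simp
      moreover have "?T \<subseteq> V" using S v0 by auto
      ultimately have "?T \<in> ?I" using even_img by blast
      moreover have "S = xs ?T {?v0}" by simp
      ultimately show ?thesis by blast
    qed
  qed
  hence "card (Pow V) \<le> card (?I \<union> (\<lambda>T. xs T {?v0}) ` ?I)"
    by (intro card_mono) (use A1_fin in auto)
  also have "\<dots> \<le> card ?I + card ((\<lambda>T. xs T {?v0}) ` ?I)" by (rule card_Un_le)
  also have "\<dots> \<le> card ?I + card ?I" using card_image_le A1_fin by (simp add: card_image_le)
  finally show ?thesis using V_finite by (simp add: card_Pow)
qed

lemma jct: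
  assumes K: "K \<in> A1" "bd0 K = {}"
  shows "\<exists>Y\<in>P. bnd Y = K"
proof -
  let ?Z = "{K\<in>A1. bd0 K = {}}"
  let ?kP = "{Y\<in>P. bnd Y = {}}"
  have h1: "card P = card (bnd ` P) * card ?kP"
    by (rule hom_card[OF P_fin P_xs bnd_lin])
  have h2: "card A1 = card (bd0 ` A1) * card ?Z"
    by (rule hom_card[OF A1_fin A1_xs bd0_lin[OF A1_sub A1_sub]])
  have "?kP \<subseteq> {{}, Dt}" using bnd_ker by auto
  hence "card ?kP \<le> card {{}, Dt}" by (intro card_mono) auto
  also have "\<dots> \<le> 2" by (simp add: card_insert_if)
  finally have k2: "card ?kP \<le> 2" .
  have i1: "2 ^ card R \<le> card (bnd ` P) * 2"
    using h1 mult_le_mono2[OF k2, of "card (bnd ` P)"] P_card by simp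
  have i2: "2 ^ card E = card (bd0 ` A1) * card ?Z" using h2 A1_card by simp
  have i3: "2 ^ card V \<le> 2 * card (bd0 ` A1)" by (rule img_card)
  have EV: "card E = 2 * card V" using card_Dt_V card_Dt_E by simp
  have "card ?Z * 2 ^ card V \<le> card ?Z * (2 * card (bd0 ` A1))"
    using i3 by (rule mult_le_mono2)
  also have "\<dots> = 2 * 2 ^ card E" using i2 by simp
  finally have j1: "card ?Z * 2 ^ card V \<le> 2 * 2 ^ card E" .
  have "card ?Z * 2 ^ card V * 2 ^ card R \<le> 2 * 2 ^ card E * (card (bnd ` P) * 2)"
    using j1 i1 by (rule mult_le_mono)
  also have "\<dots> = 2 ^ (card E + 2) * card (bnd ` P)" by (simp add: power_add)
  also have "card E + 2 = card V + card R" using EV RV by simp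
  finally have "card ?Z * 2 ^ (card V + card R) \<le> card (bnd ` P) * 2 ^ (card V + card R)"
    by (simp add: power_add mult.commute mult.left_commute)
  hence le: "card ?Z \<le> card (bnd ` P)" by simp
  have sub: "bnd ` P \<subseteq> ?Z" using bnd_A1 bnd_even by auto
  have "finite ?Z" using A1_fin by simp
  hence eq: "bnd ` P = ?Z" using card_subset_eq[OF _ sub] le card_mono[OF _ sub] by (meson antisym)
  have "K \<in> bnd ` P" using K by (subst eq) simp
  then obtain Y where "Y \<in> P" "K = bnd Y" by blast
  thus ?thesis by blast
qed

end


context knot
begin

abbreviation "sg \<equiv> s \<circ> s \<circ> a"

lemma sg_apply: "sg d = s (s (a d))" by simp

lemma s2_fix: "d \<in> Dt \<Longrightarrow> s (s d) \<noteq> d" using s4(2) by fastforce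

lemma sg_in: "d \<in> Dt \<Longrightarrow> sg d \<in> Dt" by (rule G.f_in)

lemma sg_a_sg: "z \<in> Dt \<Longrightarrow> sg (a (sg z)) = a z"
  using aa[OF s_in[OF s_in[OF a_in]]] s4(1)[OF a_in] by simp

lemma noinv: assumes d: "d \<in> Dt" shows "a d \<notin> dorbit sg d"
proof
  assume "a d \<in> dorbit sg d"
  then obtain c where c: "a d = (sg ^^ c) d" unfolding dorbit_def by auto
  have claim: "j \<le> c \<Longrightarrow> a ((sg ^^ j) d) = (sg ^^ (c - j)) d" for j
  proof (induction j)
    case 0 thus ?case using c by (simp only: funpow_0 diff_zero)
  next
    case (Suc j)
    let ?z = "(sg ^^ j) d"
    have z: "?z \<in> Dt" using G.funpow_in[OF d] .
    have IH: "a ?z = (sg ^^ (c - j)) d" using Suc.IH[OF Suc_leD[OF Suc.prems]] .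
    have cj: "c - j = Suc (c - Suc j)" using Suc(2) by simp
    have "sg (a (sg ?z)) = sg ((sg ^^ (c - Suc j)) d)"
      using sg_a_sg[OF z] IH cj by simp
    moreover have "a (sg ?z) \<in> Dt" using a_in[OF sg_in[OF z]] .
    moreover have "(sg ^^ (c - Suc j)) d \<in> Dt" using G.funpow_in[OF d] .
    ultimately have fin: "a (sg ?z) = (sg ^^ (c - Suc j)) d"
      using G.inj unfolding inj_on_def by blast
    have e: "(sg ^^ Suc j) d = sg ?z" by (simp only: funpow.simps(2) o_apply)
    show ?case unfolding e by (rule fin)
  qed
  show False
  proof (cases "even c")
    case True
    let ?j = "c div 2"
    have "a ((sg ^^ ?j) d) = (sg ^^ ?j) d" using claim[of ?j] True by (simp add: div_le_dividend)
      (metis True add_diff_cancel_right' dvd_mult_div_cancel mult_2)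
    thus False using afix[OF G.funpow_in[OF d]] by simp
  next
    case False
    let ?j = "c div 2"
    let ?x = "(sg ^^ ?j) d"
    have cj: "c - ?j = Suc ?j" using False by presburger
    have "a ?x = (sg ^^ Suc ?j) d" using claim[of ?j] cj by simp
    also have "\<dots> = s (s (a ?x))" by simp
    finally have eq: "a ?x = s (s (a ?x))" .
    have "s (s (a ?x)) \<noteq> a ?x" by (rule s2_fix[OF a_in[OF G.funpow_in[OF d]]])
    thus False using eq by simp
  qed
qed

definition o0 where "o0 = (SOME d. d \<in> Dt)"
lemma o0: "o0 \<in> Dt" unfolding o0_def using ne by (simp add: some_in_eq)

abbreviation "Ob \<equiv> dorbit sg o0"

lemma O_sub: "Ob \<subseteq> Dt" using G.orbit_sub[OF o0] .
lemma O_cl: "sg ` Ob \<subseteq> Ob" using G.f_in_orbit by auto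
lemma O_sg: "d \<in> Dt \<Longrightarrow> (sg d \<in> Ob) = (d \<in> Ob)" using G.closed_iff[OF O_cl] by blast

lemma inO_a: assumes d: "d \<in> Dt" shows "(a d \<in> Ob) = (d \<notin> Ob)"
proof (cases "d \<in> Ob")
  case True
  hence "dorbit sg d = Ob" using G.orbit_eq[OF o0] by simp
  thus ?thesis using noinv[OF d] True by simp
next
  case False
  have "a d \<in> Ob"
  proof (rule ccontr)
    assume nO: "a d \<notin> Ob"
    have ad: "a d \<in> Dt" using a_in[OF d] .
    have "dorbit sg d \<noteq> Ob" using False G.self_in[of d] by auto
    moreover have "dorbit sg (a d) \<noteq> Ob" using nO G.self_in[of "a d"] by auto
    moreover have "dorbit sg d \<noteq> dorbit sg (a d)" using noinv[OF d] G.self_in[of "a d"] by auto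
    ultimately have "card {Ob, dorbit sg d, dorbit sg (a d)} = 3" by (simp add: card_insert_if)
    moreover have "{Ob, dorbit sg d, dorbit sg (a d)} \<subseteq> dorbit sg ` Dt" using d ad o0 by auto
    ultimately have "3 \<le> card (dorbit sg ` Dt)" using fin by (metis card_mono finite_imageI)
    thus False using two by simp
  qed
  thus ?thesis using False by simp
qed

lemma inO_s2: assumes d: "d \<in> Dt" shows "(s (s d) \<in> Ob) = (d \<notin> Ob)"
proof -
  have "s (s d) = sg (a d)" using aa[OF d] by simp
  thus ?thesis using O_sg[OF a_in[OF d]] inO_a[OF d] by simp
qed

definition Ln where "Ln = card Ob"
definition ot where "ot j = (sg ^^ j) o0"

lemma enum: "Ln > 0" "ot Ln = o0" "inj_on ot {..<Ln}" "Ob = ot ` {..<Ln}"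
proof -
  obtain L where L: "L > 0" "(sg ^^ L) o0 = o0" "inj_on (\<lambda>j. (sg ^^ j) o0) {..<L}"
    "Ob = (\<lambda>j. (sg ^^ j) o0) ` {..<L}"
    using G.orbit_enum[OF o0] by blast
  have "Ln = L" unfolding Ln_def using L(3,4) by (simp add: card_image)
  thus "Ln > 0" "ot Ln = o0" "inj_on ot {..<Ln}" "Ob = ot ` {..<Ln}"
    using L unfolding ot_def by (auto simp: comp_def)
qed

lemma ot_O: "ot j \<in> Ob" unfolding ot_def by (rule G.funpow_in_orbit)
lemma ot_Dt: "ot j \<in> Dt" using ot_O O_sub by auto
lemma ot_Suc: "ot (Suc j) = sg (ot j)" unfolding ot_def by simp
lemma ot_inj: "i < Ln \<Longrightarrow> j < Ln \<Longrightarrow> ot i = ot j \<Longrightarrow> i = j"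
  using enum(3) unfolding inj_on_def by blast
lemma O_ex: "d \<in> Ob \<Longrightarrow> \<exists>j<Ln. d = ot j" using enum(4) by auto
lemma aot_nO: "a (ot j) \<notin> Ob" using inO_a[OF ot_Dt] ot_O by simp

lemma dart_cases: "d \<in> Dt \<Longrightarrow> (\<exists>j<Ln. d = ot j) \<or> (\<exists>j<Ln. d = a (ot j))"
proof -
  assume d: "d \<in> Dt"
  show ?thesis
  proof (cases "d \<in> Ob")
    case True thus ?thesis using O_ex by auto
  next
    case False
    hence "a d \<in> Ob" using inO_a[OF d] by simp
    then obtain j where "j < Ln" "a d = ot j" using O_ex by blast
    hence "d = a (ot j)" using aa[OF d] by metis
    thus ?thesis using \<open>j < Ln\<close> by auto
  qed
qed

definition nxt where "nxt j = (if Suc j = Ln then 0 else Suc j)"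
definition prv where "prv j = (if j = 0 then Ln - 1 else j - 1)"

lemma ot_nxt: "ot (nxt j) = sg (ot j)"
proof (cases "Suc j = Ln")
  case True
  have "ot 0 = ot Ln" using enum(2) by (simp add: ot_def)
  thus ?thesis using True ot_Suc[of j] unfolding nxt_def by simp
next
  case False thus ?thesis using ot_Suc[of j] unfolding nxt_def by simp
qed
lemma nxt_lt: "j < Ln \<Longrightarrow> nxt j < Ln" unfolding nxt_def by auto
lemma prv_lt: "j < Ln \<Longrightarrow> prv j < Ln" unfolding prv_def using enum(1) by auto
lemma nxt_prv: "j < Ln \<Longrightarrow> nxt (prv j) = j" unfolding nxt_def prv_def using enum(1) by auto

lemma a_ot: "a (ot j) = s (s (ot (nxt j)))"
  using ot_nxt s4(1)[OF a_in[OF ot_Dt]] by simp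

lemma s2_ot: "j < Ln \<Longrightarrow> s (s (ot j)) = a (ot (prv j))"
  using a_ot[of "prv j"] nxt_prv by simp

lemma two_pos:
  assumes v: "v \<in> V"
  shows "\<exists>p q. p < q \<and> q < Ln \<and> (\<forall>j<Ln. ot j \<in> v \<longleftrightarrow> j = p \<or> j = q)"
proof -
  obtain g where g: "g \<in> Dt" "v = vx g" using v unfolding crossings_def by auto
  have gs: "s g \<in> Dt" "s (s g) \<in> Dt" "s (s (s g)) \<in> Dt" using g s_in by auto
  have vg: "v = {g, s g, s (s g), s (s (s g))}" using g vx_eq by simp
  have dist: "distinct [g, s g, s (s g), s (s (s g))]" using s4(2)[OF g(1)] .
  have s4g: "s (s (s (s g))) = g" using s4(1)[OF g(1)] .
  obtain x where x: "x \<in> {g, s (s g)}" "x \<in> Ob" "\<forall>y\<in>{g, s (s g)}. y \<in> Ob \<longrightarrow> y = x"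
    using inO_s2[OF g(1)] by (cases "g \<in> Ob") auto
  obtain y where y: "y \<in> {s g, s (s (s g))}" "y \<in> Ob" "\<forall>z\<in>{s g, s (s (s g))}. z \<in> Ob \<longrightarrow> z = y"
    using inO_s2[OF gs(1)] by (cases "s g \<in> Ob") auto
  have Ov: "\<forall>d\<in>v. d \<in> Ob \<longleftrightarrow> d = x \<or> d = y" using x y vg by auto
  have xy: "x \<noteq> y" using x(1) y(1) dist by auto
  obtain i where i: "i < Ln" "x = ot i" using O_ex x(2) by blast
  obtain k where k: "k < Ln" "y = ot k" using O_ex y(2) by blast
  have ik: "i \<noteq> k" using xy i k by auto
  have char: "\<forall>j<Ln. ot j \<in> v \<longleftrightarrow> j = i \<or> j = k"
  proof (intro allI impI)
    fix j assume j: "j < Ln"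
    show "ot j \<in> v \<longleftrightarrow> j = i \<or> j = k"
    proof
      assume "ot j \<in> v"
      hence "ot j = x \<or> ot j = y" using Ov ot_O by auto
      thus "j = i \<or> j = k" using ot_inj i k j by auto
    next
      assume "j = i \<or> j = k"
      thus "ot j \<in> v" using i k x(1) y(1) vg by auto
    qed
  qed
  show ?thesis
  proof (cases "i < k")
    case True thus ?thesis using char k by blast
  next
    case False thus ?thesis using char i ik by (intro exI[of _ k] exI[of _ i]) auto
  qed
qed

definition pq where "pq v = (SOME pq. fst pq < snd pq \<and> snd pq < Ln \<and> (\<forall>j<Ln. ot j \<in> v \<longleftrightarrow> j = fst pq \<or> j = snd pq))"
definition pv where "pv v = fst (pq v)"
definition qv where "qv v = snd (pq v)"

lemma pos:
  assumes v: "v \<in> V"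
  shows "pv v < qv v" "qv v < Ln" "\<And>j. j < Ln \<Longrightarrow> ot j \<in> v \<longleftrightarrow> j = pv v \<or> j = qv v"
proof -
  obtain p q where "p < q \<and> q < Ln \<and> (\<forall>j<Ln. ot j \<in> v \<longleftrightarrow> j = p \<or> j = q)" using two_pos[OF v] by blast
  hence "\<exists>pq. fst pq < snd pq \<and> snd pq < Ln \<and> (\<forall>j<Ln. ot j \<in> v \<longleftrightarrow> j = fst pq \<or> j = snd pq)"
    by (intro exI[of _ "(p, q)"]) auto
  hence "fst (pq v) < snd (pq v) \<and> snd (pq v) < Ln \<and> (\<forall>j<Ln. ot j \<in> v \<longleftrightarrow> j = fst (pq v) \<or> j = snd (pq v))"
    unfolding pq_def by (rule someI_ex)
  thus "pv v < qv v" "qv v < Ln" "\<And>j. j < Ln \<Longrightarrow> ot j \<in> v \<longleftrightarrow> j = pv v \<or> j = qv v"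
    unfolding pv_def qv_def by auto
qed

lemma pv_in: assumes "v \<in> V" shows "ot (pv v) \<in> v"
  using pos(3)[OF assms, of "pv v"] pos(1,2)[OF assms] by simp
lemma qv_in: assumes "v \<in> V" shows "ot (qv v) \<in> v" using pos[OF assms] by auto

lemma vx_ot: "j < Ln \<Longrightarrow> vx (ot j) \<in> V \<and> (j = pv (vx (ot j)) \<or> j = qv (vx (ot j)))"
  using vx_in[OF ot_Dt] pos(3) S.self_in by blast

lemma v_eq_vx: "v \<in> V \<Longrightarrow> v = vx (ot (pv v))" using mem_V pv_in by blast

lemma qv_rel:
  assumes v: "v \<in> V"
  shows "ot (qv v) = s (ot (pv v)) \<or> ot (qv v) = s (s (s (ot (pv v))))"
proof -
  let ?x = "ot (pv v)"
  have x: "?x \<in> Dt" by (rule ot_Dt)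
  have "ot (qv v) \<in> {?x, s ?x, s (s ?x), s (s (s ?x))}"
    using qv_in[OF v] v_eq_vx[OF v] vx_eq[OF x] by simp
  moreover have "ot (qv v) \<noteq> ?x" using pos[OF v] ot_inj by (metis less_trans nat_neq_iff)
  moreover have "ot (qv v) \<noteq> s (s ?x)" using inO_s2[OF x] ot_O by metis
  ultimately show ?thesis by auto
qed

lemma V_distinct: "v \<in> V \<Longrightarrow> w \<in> V \<Longrightarrow> d \<in> v \<Longrightarrow> d \<in> w \<Longrightarrow> v = w"
  using mem_V by metis

end


lemma inj4: "f x0 \<noteq> f x1 \<Longrightarrow> f x0 \<noteq> f x2 \<Longrightarrow> f x0 \<noteq> f x3 \<Longrightarrow> f x1 \<noteq> f x2 \<Longrightarrow>
  f x1 \<noteq> f x3 \<Longrightarrow> f x2 \<noteq> f x3 \<Longrightarrow> inj_on f {x0, x1, x2, x3}"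
  unfolding inj_on_def by auto

lemma inj3: "f x0 \<noteq> f x1 \<Longrightarrow> f x0 \<noteq> f x2 \<Longrightarrow> f x1 \<noteq> f x2 \<Longrightarrow> inj_on f {x0, x1, x2}"
  unfolding inj_on_def by auto

context knot
begin

definition K where "K w = {d \<in> Dt. \<exists>j. pv w \<le> j \<and> j < qv w \<and> (d = ot j \<or> d = a (ot j))}"

lemma K_ot:
  assumes w: "w \<in> V" and j: "j < Ln"
  shows "(ot j \<in> K w) = (pv w \<le> j \<and> j < qv w)"
proof
  assume "ot j \<in> K w"
  then obtain i where i: "pv w \<le> i" "i < qv w" "ot j = ot i \<or> ot j = a (ot i)"
    unfolding K_def by auto
  have "ot j \<noteq> a (ot i)" using aot_nO ot_O by metis
  hence "ot j = ot i" using i by auto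
  moreover have "i < Ln" using i(2) pos(2)[OF w] by simp
  ultimately have "i = j" using ot_inj j by metis
  thus "pv w \<le> j \<and> j < qv w" using i by simp
next
  assume "pv w \<le> j \<and> j < qv w"
  thus "ot j \<in> K w" unfolding K_def using ot_Dt by auto
qed

lemma K_aot:
  assumes w: "w \<in> V" and j: "j < Ln"
  shows "(a (ot j) \<in> K w) = (pv w \<le> j \<and> j < qv w)"
proof
  assume "a (ot j) \<in> K w"
  then obtain i where i: "pv w \<le> i" "i < qv w" "a (ot j) = ot i \<or> a (ot j) = a (ot i)"
    unfolding K_def by auto
  have "a (ot j) \<noteq> ot i" using aot_nO ot_O by metis
  hence "a (ot j) = a (ot i)" using i by auto
  hence "ot j = ot i" using aa[OF ot_Dt] by metis
  moreover have "i < Ln" using i(2) pos(2)[OF w] by simp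
  ultimately have "i = j" using ot_inj j by metis
  thus "pv w \<le> j \<and> j < qv w" using i by simp
next
  assume "pv w \<le> j \<and> j < qv w"
  thus "a (ot j) \<in> K w" unfolding K_def using a_in[OF ot_Dt] by auto
qed

lemma K_A1: "K w \<in> A1"
  unfolding K_def A1_def using aa[OF ot_Dt] a_in[OF ot_Dt] ot_Dt by auto

lemma K_sub: "K w \<subseteq> Dt" unfolding K_def by auto

lemma v4:
  assumes v: "v \<in> V"
  shows "v = {ot (pv v), s (s (ot (pv v))), ot (qv v), s (s (ot (qv v)))}"
        "distinct [ot (pv v), s (s (ot (pv v))), ot (qv v), s (s (ot (qv v)))]"
proof -
  let ?x = "ot (pv v)"
  have x: "?x \<in> Dt" by (rule ot_Dt)
  have ve: "v = {?x, s ?x, s (s ?x), s (s (s ?x))}" using v_eq_vx[OF v] vx_eq[OF x] by simp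
  have d: "distinct [?x, s ?x, s (s ?x), s (s (s ?x))]" using s4(2)[OF x] .
  have s4x: "s (s (s (s ?x))) = ?x" using s4(1)[OF x] .
  have s5x: "s (s (s (s (s ?x)))) = s ?x" using s4x by simp
  have "v = {?x, s (s ?x), ot (qv v), s (s (ot (qv v)))} \<and>
    distinct [?x, s (s ?x), ot (qv v), s (s (ot (qv v)))]"
  proof (cases "ot (qv v) = s ?x")
    case True
    have "v = {?x, s (s ?x), s ?x, s (s (s ?x))}" using ve by (simp add: insert_commute)
    moreover have "distinct [?x, s (s ?x), s ?x, s (s (s ?x))]" using d by auto
    ultimately show ?thesis using True by simp
  next
    case False
    hence y: "ot (qv v) = s (s (s ?x))" using qv_rel[OF v] by simp
    have "v = {?x, s (s ?x), s (s (s ?x)), s ?x}" using ve by (simp add: insert_commute)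
    moreover have "distinct [?x, s (s ?x), s (s (s ?x)), s ?x]" using d by auto
    ultimately show ?thesis using y s5x by simp
  qed
  thus "v = {?x, s (s ?x), ot (qv v), s (s (ot (qv v)))}"
    "distinct [?x, s (s ?x), ot (qv v), s (s (ot (qv v)))]" by auto
qed

lemma prv_I:
  assumes w: "w \<in> V" and j: "j < Ln" "j \<noteq> pv w" "j \<noteq> qv w"
  shows "(pv w \<le> prv j \<and> prv j < qv w) = (pv w \<le> j \<and> j < qv w)"
  using pos(1,2)[OF w] j unfolding prv_def by auto

lemma prv_p: assumes w: "w \<in> V" shows "\<not> (pv w \<le> prv (pv w) \<and> prv (pv w) < qv w)"
  using pos(1,2)[OF w] unfolding prv_def by auto

lemma prv_q: assumes w: "w \<in> V" shows "pv w \<le> prv (qv w) \<and> prv (qv w) < qv w"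
  using pos(1,2)[OF w] unfolding prv_def by auto

lemma pos_lt: "v \<in> V \<Longrightarrow> pv v < Ln" "v \<in> V \<Longrightarrow> qv v < Ln"
  using pos(1,2) by (auto intro: less_trans)

lemma K_even: assumes w: "w \<in> V" shows "bd0 (K w) = {}"
proof -
  { fix v assume v: "v \<in> V"
    let ?p = "pv v" and ?q = "qv v"
    have p: "?p < Ln" and q: "?q < Ln" using pos_lt[OF v] by auto
    have "card (K w \<inter> v) = card ({ot ?p, s (s (ot ?p)), ot ?q, s (s (ot ?q))} \<inter> K w)"
      using v4(1)[OF v] by (simp add: Int_commute)
    also have "\<dots> = of_bool (ot ?p \<in> K w) + of_bool (s (s (ot ?p)) \<in> K w)
       + of_bool (ot ?q \<in> K w) + of_bool (s (s (ot ?q)) \<in> K w)"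
      by (rule card4[OF v4(2)[OF v]])
    also have "\<dots> = of_bool (pv w \<le> ?p \<and> ?p < qv w) + of_bool (pv w \<le> prv ?p \<and> prv ?p < qv w)
       + of_bool (pv w \<le> ?q \<and> ?q < qv w) + of_bool (pv w \<le> prv ?q \<and> prv ?q < qv w)"
      using K_ot[OF w p] K_ot[OF w q] K_aot[OF w prv_lt[OF p]] K_aot[OF w prv_lt[OF q]]
        s2_ot[OF p] s2_ot[OF q] by simp
    finally have c: "card (K w \<inter> v) = \<dots>" .
    have "even (card (K w \<inter> v))"
    proof (cases "v = w")
      case True
      thus ?thesis using c prv_p[OF w] prv_q[OF w] pos(1)[OF w] by simp
    next
      case False
      have ne: "?p \<noteq> pv w" "?p \<noteq> qv w" "?q \<noteq> pv w" "?q \<noteq> qv w"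
        using False V_distinct[OF v w] pv_in[OF v] qv_in[OF v] pv_in[OF w] qv_in[OF w] by metis+
      show ?thesis using c prv_I[OF w p ne(1,2)] prv_I[OF w q ne(3,4)] by simp
    qed }
  thus ?thesis unfolding bd0_def by auto
qed

lemma K_jct: "w \<in> V \<Longrightarrow> \<exists>Y\<in>P. bnd Y = K w"
  using jct[OF K_A1 K_even] by blast

definition gw where "gw w = (if ot (qv w) = s (ot (pv w)) then ot (pv w) else s (ot (pv w)))"

definition Yw where "Yw w = (let Y = (SOME Y. Y \<in> P \<and> bnd Y = K w) in if gw w \<in> Y then Y else Dt - Y)"

lemma bnd_compl: "Y \<subseteq> Dt \<Longrightarrow> bnd (Dt - Y) = bnd Y"
  unfolding bnd_def using a_in by auto

lemma gw_Dt: "gw w \<in> Dt" unfolding gw_def using ot_Dt s_in by auto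

lemma gw_in: "w \<in> V \<Longrightarrow> gw w \<in> w"
  unfolding gw_def using pv_in v_eq_vx S.f_in_orbit by (metis)

lemma Yw: assumes w: "w \<in> V" shows "Yw w \<in> P" "bnd (Yw w) = K w" "gw w \<in> Yw w"
proof -
  define Y where "Y = (SOME Y. Y \<in> P \<and> bnd Y = K w)"
  have Y: "Y \<in> P" "bnd Y = K w" unfolding Y_def using someI_ex[OF K_jct[OF w, unfolded Bex_def]] by auto
  have Yw: "Yw w = (if gw w \<in> Y then Y else Dt - Y)" unfolding Yw_def Y_def Let_def ..
  show "Yw w \<in> P" using Y P_compl Yw by auto
  show "bnd (Yw w) = K w" using Y bnd_compl[OF P_sub[OF Y(1)]] Yw by auto
  show "gw w \<in> Yw w" using Yw gw_Dt by auto
qed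

lemma Yw_only:
  assumes w: "w \<in> V"
  shows "s (gw w) \<notin> Yw w" "s (s (gw w)) \<notin> Yw w" "s (s (s (gw w))) \<notin> Yw w"
proof -
  let ?p = "pv w" and ?q = "qv w"
  let ?x = "ot ?p" and ?y = "ot ?q"
  let ?Y = "Yw w"
  have Y: "?Y \<in> P" "bnd ?Y = K w" "gw w \<in> ?Y" using Yw[OF w] by auto
  have p: "?p < Ln" and q: "?q < Ln" using pos_lt[OF w] by auto
  have x: "?x \<in> Dt" "?y \<in> Dt" by (rule ot_Dt)+
  have fl: "\<And>d. d \<in> Dt \<Longrightarrow> ((d \<in> ?Y) \<noteq> (s d \<in> ?Y)) = (d \<in> K w)"
    using flip[OF Y(1)] Y(2) by simp
  have xK: "?x \<in> K w" using K_ot[OF w p] pos(1)[OF w] by simp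
  have yK: "?y \<notin> K w" using K_ot[OF w q] by simp
  have x2K: "s (s ?x) \<notin> K w" using K_aot[OF w prv_lt[OF p]] s2_ot[OF p] prv_p[OF w] by simp
  have y2K: "s (s ?y) \<in> K w" using K_aot[OF w prv_lt[OF q]] s2_ot[OF q] prv_q[OF w] by simp
  have s4x: "s (s (s (s ?x))) = ?x" using s4(1)[OF x(1)] .
  have xs: "s ?x \<in> Dt" "s (s ?x) \<in> Dt" "s (s (s ?x)) \<in> Dt" using s_in x by auto
  have all: "s (gw w) \<notin> ?Y \<and> s (s (gw w)) \<notin> ?Y \<and> s (s (s (gw w))) \<notin> ?Y"
  proof (cases "?y = s ?x")
    case True
    hence g: "gw w = ?x" unfolding gw_def by simp
    have a1: "s ?x \<notin> ?Y" using fl[OF x(1)] xK Y(3) g by simp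
    have a2: "s (s ?x) \<notin> ?Y" using fl[OF xs(1)] yK True a1 by simp
    have a3: "s (s (s ?x)) \<notin> ?Y" using fl[OF xs(2)] x2K a2 by simp
    show ?thesis using a1 a2 a3 g by simp
  next
    case False
    hence y: "?y = s (s (s ?x))" using qv_rel[OF w] by simp
    hence g: "gw w = s ?x" unfolding gw_def using False by simp
    have sxK: "s ?x \<in> K w" using y2K y s4x by simp
    have a1: "s (s ?x) \<notin> ?Y" using fl[OF xs(1)] sxK Y(3) g by simp
    have a2: "s (s (s ?x)) \<notin> ?Y" using fl[OF xs(2)] x2K a1 by simp
    have a3: "?x \<notin> ?Y" using fl[OF x(1)] xK Y(3) g by simp
    show ?thesis using a1 a2 a3 g s4x by simp
  qed
  thus "s (gw w) \<notin> ?Y" "s (s (gw w)) \<notin> ?Y" "s (s (s (gw w))) \<notin> ?Y" by auto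
qed

lemma Dt_A1: "Dt \<in> A1" unfolding A1_def using a_in by auto

lemma Dt_even: "bd0 Dt = {}"
proof -
  { fix v assume v: "v \<in> V"
    then obtain d where d: "d \<in> Dt" "v = vx d" unfolding crossings_def by auto
    have "Dt \<inter> v = v" using V_sub[OF v] by auto
    hence "card (Dt \<inter> v) = 4" using c4 d by simp }
  thus ?thesis unfolding bd0_def by auto
qed

definition X0 where "X0 = (SOME Y. Y \<in> P \<and> bnd Y = Dt)"

lemma X0: "X0 \<in> P" "bnd X0 = Dt"
proof -
  have "\<exists>Y. Y \<in> P \<and> bnd Y = Dt" using jct[OF Dt_A1 Dt_even] by blast
  hence "X0 \<in> P \<and> bnd X0 = Dt" unfolding X0_def by (rule someI_ex)
  thus "X0 \<in> P" "bnd X0 = Dt" by auto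
qed

lemma adj: assumes d: "d \<in> Dt" shows "fc d \<noteq> fc (s d)"
proof
  assume eq: "fc d = fc (s d)"
  have "(d \<in> X0) \<noteq> (s d \<in> X0)" using flip[OF X0(1) d] X0(2) d by simp
  thus False using P_face[OF X0(1) d s_in[OF d] eq] by simp
qed

definition tau where "tau Y = {v \<in> V. odd (card {F \<in> R. F \<subseteq> Y \<and> v \<inter> F \<noteq> {}})}"

lemma faces_touch:
  assumes Y: "Y \<in> P" and v: "v \<in> V"
  shows "{F \<in> R. F \<subseteq> Y \<and> v \<inter> F \<noteq> {}} = fc ` (v \<inter> Y)"
proof
  have cl: "(s \<circ> a) ` Y \<subseteq> Y" using Y unfolding P_def by auto
  show "{F \<in> R. F \<subseteq> Y \<and> v \<inter> F \<noteq> {}} \<subseteq> fc ` (v \<inter> Y)"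
  proof
    fix F assume F: "F \<in> {F \<in> R. F \<subseteq> Y \<and> v \<inter> F \<noteq> {}}"
    then obtain x where x: "x \<in> Dt" "F = fc x" unfolding regions_def by auto
    obtain d where d: "d \<in> v" "d \<in> F" using F by auto
    have "fc d = F" using F.orbit_eq[OF x(1)] d(2) x(2) by simp
    moreover have "d \<in> Y" using d(2) F by auto
    ultimately show "F \<in> fc ` (v \<inter> Y)" using d(1) by auto
  qed
  show "fc ` (v \<inter> Y) \<subseteq> {F \<in> R. F \<subseteq> Y \<and> v \<inter> F \<noteq> {}}"
  proof
    fix F assume "F \<in> fc ` (v \<inter> Y)"
    then obtain d where d: "d \<in> v" "d \<in> Y" "F = fc d" by auto
    have dD: "d \<in> Dt" using d V_sub[OF v] by auto
    have "F \<in> R" using d(3) dD unfolding regions_def by auto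
    moreover have "F \<subseteq> Y" using F.closed_orbit[OF cl d(2)] d(3) by simp
    moreover have "d \<in> v \<inter> F" using d F.self_in by auto
    ultimately show "F \<in> {F \<in> R. F \<subseteq> Y \<and> v \<inter> F \<noteq> {}}" by auto
  qed
qed

definition nug where "nug w \<longleftrightarrow> fc (s (gw w)) = fc (s (s (s (gw w))))"

lemma tau_formula:
  assumes Y: "Y \<in> P" and w: "w \<in> V"
  shows "(w \<in> tau Y) = (odd (card (w \<inter> Y)) \<noteq> (nug w \<and> s (gw w) \<in> Y))"
proof -
  define g where "g = gw w"
  have g: "g \<in> Dt" unfolding g_def by (rule gw_Dt)
  have gs: "s g \<in> Dt" "s (s g) \<in> Dt" "s (s (s g)) \<in> Dt" using g s_in by auto
  have we: "w = {g, s g, s (s g), s (s (s g))}"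
    using mem_V[OF w gw_in[OF w]] vx_eq[OF g] unfolding g_def by simp
  have dist: "distinct [g, s g, s (s g), s (s (s g))]" using s4(2)[OF g] .
  have Yg: "g \<in> Yw w" and Yo: "s g \<notin> Yw w" "s (s g) \<notin> Yw w" "s (s (s g)) \<notin> Yw w"
    using Yw[OF w] Yw_only[OF w] unfolding g_def by auto
  have f01: "fc g \<noteq> fc (s g)" using P_face[OF Yw(1)[OF w] g gs(1)] Yg Yo by blast
  have f02: "fc g \<noteq> fc (s (s g))" using P_face[OF Yw(1)[OF w] g gs(2)] Yg Yo by blast
  have f03: "fc g \<noteq> fc (s (s (s g)))" using P_face[OF Yw(1)[OF w] g gs(3)] Yg Yo by blast
  have f12: "fc (s g) \<noteq> fc (s (s g))" using adj[OF gs(1)] .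
  have f23: "fc (s (s g)) \<noteq> fc (s (s (s g)))" using adj[OF gs(2)] .
  have wfin: "finite w" using V_fin[OF w] .
  have cnt: "card {F \<in> R. F \<subseteq> Y \<and> w \<inter> F \<noteq> {}} = card (fc ` (w \<inter> Y))"
    using faces_touch[OF Y w] by simp
  have "(w \<in> tau Y) = (odd (card (w \<inter> Y)) \<noteq> (nug w \<and> s g \<in> Y))"
  proof (cases "nug w")
    case False
    hence f13: "fc (s g) \<noteq> fc (s (s (s g)))" unfolding nug_def g_def by simp
    have "inj_on fc {g, s g, s (s g), s (s (s g))}" by (rule inj4[of fc g "s g" "s (s g)" "s (s (s g))", OF f01 f02 f03 f12 f13 f23])
    hence "inj_on fc w" using we by simp
    hence "card (fc ` (w \<inter> Y)) = card (w \<inter> Y)" by (intro card_image) (auto intro: inj_on_subset)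
    thus ?thesis using False cnt unfolding tau_def using w by simp
  next
    case True
    hence f13: "fc (s g) = fc (s (s (s g)))" unfolding nug_def g_def by simp
    let ?w' = "{g, s g, s (s g)}"
    have inj: "inj_on fc ?w'" by (rule inj3[of fc g "s g" "s (s g)", OF f01 f02 f12])
    have eqv: "(s g \<in> Y) = (s (s (s g)) \<in> Y)" using P_face[OF Y gs(1) gs(3) f13] .
    have im: "fc ` (w \<inter> Y) = fc ` (?w' \<inter> Y)"
    proof
      show "fc ` (?w' \<inter> Y) \<subseteq> fc ` (w \<inter> Y)" using we by auto
      show "fc ` (w \<inter> Y) \<subseteq> fc ` (?w' \<inter> Y)"
      proof
        fix F assume "F \<in> fc ` (w \<inter> Y)"
        then obtain d where d: "d \<in> w" "d \<in> Y" "F = fc d" by auto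
        show "F \<in> fc ` (?w' \<inter> Y)"
        proof (cases "d = s (s (s g))")
          case True
          hence "s g \<in> ?w' \<inter> Y" "F = fc (s g)" using d eqv f13 by auto
          thus ?thesis by blast
        next
          case False
          hence "d \<in> ?w' \<inter> Y" using d we by auto
          thus ?thesis using d(3) by blast
        qed
      qed
    qed
    have c1: "card (fc ` (w \<inter> Y)) = card (?w' \<inter> Y)"
      unfolding im by (intro card_image inj_on_subset[OF inj]) auto
    have wsplit: "w \<inter> Y = (?w' \<inter> Y) \<union> ({s (s (s g))} \<inter> Y)" using we by auto
    have disj: "(?w' \<inter> Y) \<inter> ({s (s (s g))} \<inter> Y) = {}" using dist by auto
    have "card (w \<inter> Y) = card (?w' \<inter> Y) + card ({s (s (s g))} \<inter> Y)"
      unfolding wsplit by (rule card_Un_disjoint) (use disj in auto)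
    moreover have "card ({s (s (s g))} \<inter> Y) = of_bool (s g \<in> Y)" using eqv by auto
    ultimately have "card (w \<inter> Y) = card (fc ` (w \<inter> Y)) + of_bool (s g \<in> Y)" using c1 by simp
    thus ?thesis using True cnt unfolding tau_def using w by auto
  qed
  thus ?thesis unfolding g_def .
qed

end


context knot
begin

lemma Yw_v: assumes w: "w \<in> V" and d: "d \<in> w" shows "(d \<in> Yw w) = (d = gw w)"
proof -
  let ?g = "gw w"
  have g: "?g \<in> Dt" by (rule gw_Dt)
  have "w = {?g, s ?g, s (s ?g), s (s (s ?g))}"
    using mem_V[OF w gw_in[OF w]] vx_eq[OF g] by simp
  hence "d = ?g \<or> d = s ?g \<or> d = s (s ?g) \<or> d = s (s (s ?g))" using d by blast
  thus ?thesis using Yw(3)[OF w] Yw_only[OF w] by auto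
qed

lemma gw_cases: assumes w: "w \<in> V"
  shows "gw w = ot (pv w) \<or> gw w = s (ot (pv w))"
  unfolding gw_def by auto

lemma other_pos:
  assumes u: "u \<in> V" and j: "j < Ln" "ot j \<in> u"
  shows "\<exists>r. r < Ln \<and> r \<noteq> j \<and> ot r \<in> u \<and> (\<forall>i<Ln. ot i \<in> u \<longleftrightarrow> i = j \<or> i = r)
     \<and> s (ot j) \<in> {ot r, s (s (ot r))} \<and> s (s (s (ot j))) \<in> {ot r, s (s (ot r))}"
proof -
  let ?p = "pv u" and ?q = "qv u"
  have pq: "?p < ?q" "?q < Ln" "\<And>i. i < Ln \<Longrightarrow> ot i \<in> u \<longleftrightarrow> i = ?p \<or> i = ?q" using pos[OF u] by auto
  have x: "ot ?p \<in> Dt" "ot ?q \<in> Dt" by (rule ot_Dt)+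
  have s4p: "s (s (s (s (ot ?p)))) = ot ?p" using s4(1)[OF x(1)] .
  have s4q: "s (s (s (s (ot ?q)))) = ot ?q" using s4(1)[OF x(2)] .
  have jpq: "j = ?p \<or> j = ?q" using pq(3)[OF j(1)] j(2) by simp
  show ?thesis
  proof (cases "j = ?p")
    case True
    have rel: "s (ot ?p) \<in> {ot ?q, s (s (ot ?q))} \<and> s (s (s (ot ?p))) \<in> {ot ?q, s (s (ot ?q))}"
    proof (cases "ot ?q = s (ot ?p)")
      case True thus ?thesis by simp
    next
      case False
      hence "ot ?q = s (s (s (ot ?p)))" using qv_rel[OF u] by simp
      thus ?thesis using s4p by simp
    qed
    show ?thesis using True rel pq by (intro exI[of _ ?q]) (auto simp: pq(3))
  next
    case False
    hence jq: "j = ?q" using jpq by simp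
    have rel: "s (ot ?q) \<in> {ot ?p, s (s (ot ?p))} \<and> s (s (s (ot ?q))) \<in> {ot ?p, s (s (ot ?p))}"
    proof (cases "ot ?q = s (ot ?p)")
      case True thus ?thesis using s4p by simp
    next
      case False
      hence "ot ?q = s (s (s (ot ?p)))" using qv_rel[OF u] by simp
      thus ?thesis using s4p by simp
    qed
    have "?p < Ln" using pq by simp
    thus ?thesis using jq rel pq by (intro exI[of _ ?p]) (auto simp: pq(3))
  qed
qed

lemma outside_K:
  assumes w: "w \<in> V" and r: "r < Ln" "r < pv w \<or> qv w < r"
  shows "ot r \<notin> K w" "s (s (ot r)) \<notin> K w"
proof -
  show "ot r \<notin> K w" using K_ot[OF w r(1)] r(2) by auto
  have "\<not> (pv w \<le> prv r \<and> prv r < qv w)"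
    using r pos(1,2)[OF w] unfolding prv_def by auto
  thus "s (s (ot r)) \<notin> K w" using K_aot[OF w prv_lt[OF r(1)]] s2_ot[OF r(1)] by simp
qed

lemma inside_K:
  assumes w: "w \<in> V" and r: "r < Ln" "pv w < r" "r < qv w"
  shows "ot r \<in> K w" "s (s (ot r)) \<in> K w"
proof -
  show "ot r \<in> K w" using K_ot[OF w r(1)] r(2,3) by auto
  have "pv w \<le> prv r \<and> prv r < qv w"
    using r pos(1,2)[OF w] unfolding prv_def by auto
  thus "s (s (ot r)) \<in> K w" using K_aot[OF w prv_lt[OF r(1)]] s2_ot[OF r(1)] by simp
qed

lemma split_nonnug:
  assumes v: "v \<in> V" and w: "w \<in> V" and r: "r < Ln" "ot r \<in> v" "pv w < r" "r < qv w"
    and r': "r' < Ln" "ot r' \<in> v" "r' \<noteq> r" "r' < pv w \<or> qv w < r'"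
  shows "\<not> nug v"
proof
  assume nv: "nug v"
  let ?Y = "Yw w" and ?x = "ot r"
  have Y: "?Y \<in> P" "bnd ?Y = K w" using Yw[OF w] by auto
  have x: "?x \<in> Dt" by (rule ot_Dt)
  have xs: "s ?x \<in> Dt" "s (s ?x) \<in> Dt" "s (s (s ?x)) \<in> Dt" using s_in x by auto
  have fl: "\<And>d. d \<in> Dt \<Longrightarrow> ((d \<in> ?Y) \<noteq> (s d \<in> ?Y)) = (d \<in> K w)"
    using flip[OF Y(1)] Y(2) by simp
  obtain r2 where r2: "r2 < Ln" "r2 \<noteq> r" "ot r2 \<in> v" "\<forall>i<Ln. ot i \<in> v \<longleftrightarrow> i = r \<or> i = r2"
     "s ?x \<in> {ot r2, s (s (ot r2))}" "s (s (s ?x)) \<in> {ot r2, s (s (ot r2))}"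
    using other_pos[OF v r(1,2)] by blast
  have "r2 = r'" using r2(4) r' by auto
  hence c1: "s ?x \<notin> K w" "s (s (s ?x)) \<notin> K w" using r2(5,6) outside_K[OF w r'(1) r'(4)] by auto
  have c2: "?x \<in> K w" "s (s ?x) \<in> K w" using inside_K[OF w r(1,3,4)] by auto
  have s4x: "s (s (s (s ?x))) = ?x" using s4(1)[OF x] .
  have opp: "(d \<in> ?Y) \<noteq> (s (s d) \<in> ?Y)" if d: "d \<in> v" for d
  proof -
    have ve: "v = {?x, s ?x, s (s ?x), s (s (s ?x))}" using mem_V[OF v r(2)] vx_eq[OF x] by simp
    have A: "(?x \<in> ?Y) \<noteq> (s ?x \<in> ?Y)" using fl[OF x] c2 by simp
    have B: "(s ?x \<in> ?Y) = (s (s ?x) \<in> ?Y)" using fl[OF xs(1)] c1 by simp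
    have C: "(s (s ?x) \<in> ?Y) \<noteq> (s (s (s ?x)) \<in> ?Y)" using fl[OF xs(2)] c2 by simp
    have "d = ?x \<or> d = s ?x \<or> d = s (s ?x) \<or> d = s (s (s ?x))" using d ve by blast
    thus ?thesis using A B C s4x by auto
  qed
  have g: "gw v \<in> v" by (rule gw_in[OF v])
  have sg: "s (gw v) \<in> v" using g mem_V[OF v g] S.f_in_orbit S.self_in by metis
  have "(s (gw v) \<in> ?Y) \<noteq> (s (s (s (gw v))) \<in> ?Y)" using opp[OF sg] .
  moreover have "fc (s (gw v)) = fc (s (s (s (gw v))))" using nv unfolding nug_def .
  ultimately show False using P_face[OF Y(1) s_in[OF gw_Dt] s_in[OF s_in[OF s_in[OF gw_Dt]]]] by simp
qed

lemma nonint: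
  assumes v: "v \<in> V" and nv: "nug v" and w: "w \<in> V" and vw: "w \<noteq> v"
  shows "\<not> (pv v < pv w \<and> pv w < qv v \<and> qv v < qv w)"
        "\<not> (pv w < pv v \<and> pv v < qv w \<and> qv w < qv v)"
proof -
  have pv: "pv v < qv v" "qv v < Ln" "ot (pv v) \<in> v" "ot (qv v) \<in> v" "pv v < Ln"
    using pos[OF v] pv_in[OF v] qv_in[OF v] pos_lt[OF v] by auto
  show "\<not> (pv v < pv w \<and> pv w < qv v \<and> qv v < qv w)"
  proof
    assume h: "pv v < pv w \<and> pv w < qv v \<and> qv v < qv w"
    have "\<not> nug v"
      by (rule split_nonnug[OF v w pv(2) pv(4) _ _ pv(5) pv(3)]) (use h in auto)
    thus False using nv by simp
  qed
  show "\<not> (pv w < pv v \<and> pv v < qv w \<and> qv w < qv v)"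
  proof
    assume h: "pv w < pv v \<and> pv v < qv w \<and> qv w < qv v"
    have "\<not> nug v"
      by (rule split_nonnug[OF v w pv(5) pv(3) _ _ pv(2) pv(4)]) (use h in auto)
    thus False using nv by simp
  qed
qed

lemma pos_distinct:
  assumes v: "v \<in> V" and u: "u \<in> V" and uv: "u \<noteq> v"
  shows "pv u \<noteq> pv v" "pv u \<noteq> qv v" "qv u \<noteq> pv v" "qv u \<noteq> qv v"
  using V_distinct[OF v u] uv pv_in[OF v] qv_in[OF v] pv_in[OF u] qv_in[OF u] by metis+

lemma nxt_Suc: "Suc i < Ln \<Longrightarrow> nxt i = Suc i" unfolding nxt_def by simp

lemma step_eq:
  assumes v: "v \<in> V" and i: "Suc i < Ln" "\<not> (pv v \<le> i \<and> i < qv v)" "\<not> (pv v \<le> Suc i \<and> Suc i < qv v)"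
    and c: "s (ot (Suc i)) \<notin> K v" "s (s (s (ot (Suc i)))) \<notin> K v"
  shows "(ot i \<in> Yw v) = (ot (Suc i) \<in> Yw v)" "(a (ot i) \<in> Yw v) = (ot (Suc i) \<in> Yw v)"
        "(a (ot (Suc i)) \<in> Yw v) = (ot (Suc i) \<in> Yw v)"
proof -
  let ?Y = "Yw v" and ?e = "ot (Suc i)"
  have Y: "?Y \<in> P" "bnd ?Y = K v" using Yw[OF v] by auto
  have e: "?e \<in> Dt" by (rule ot_Dt)
  have es: "s ?e \<in> Dt" "s (s ?e) \<in> Dt" "s (s (s ?e)) \<in> Dt" using s_in e by auto
  have fl: "\<And>d. d \<in> Dt \<Longrightarrow> ((d \<in> ?Y) \<noteq> (s d \<in> ?Y)) = (d \<in> K v)"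
    using flip[OF Y(1)] Y(2) by simp
  have ii: "i < Ln" using i(1) by simp
  have a2: "a (ot i) = s (s ?e)" using a_ot[of i] nxt_Suc[OF i(1)] by simp
  have eK: "?e \<notin> K v" using K_ot[OF v i(1)] i(3) by simp
  have e2K: "s (s ?e) \<notin> K v" using K_aot[OF v ii] i(2) a2 by simp
  have F1: "(?e \<in> ?Y) = (s ?e \<in> ?Y)" using fl[OF e] eK by simp
  have F2: "(s ?e \<in> ?Y) = (s (s ?e) \<in> ?Y)" using fl[OF es(1)] c(1) by simp
  have F3: "(s (s ?e) \<in> ?Y) = (s (s (s ?e)) \<in> ?Y)" using fl[OF es(2)] e2K by simp
  have o3: "(ot i \<in> ?Y) = (s (s (s ?e)) \<in> ?Y)" using P_cl[OF Y(1) ot_Dt[of i]] a2 by simp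
  show "(ot i \<in> ?Y) = (?e \<in> ?Y)" using o3 F1 F2 F3 by simp
  show "(a (ot i) \<in> ?Y) = (?e \<in> ?Y)" using a2 F1 F2 by simp
  show "(a ?e \<in> ?Y) = (?e \<in> ?Y)" using P_aS[OF Y(1) e] F1 by simp
qed

lemma cross_out:
  assumes v: "v \<in> V" and nv: "nug v" and k: "k < Ln" "k < pv v \<or> qv v < k"
  shows "s (ot k) \<notin> K v" "s (s (s (ot k))) \<notin> K v"
proof -
  let ?u = "vx (ot k)"
  have u: "?u \<in> V" using vx_in[OF ot_Dt] .
  have ku: "ot k \<in> ?u" by (rule S.self_in)
  have pq: "pv v < qv v" "qv v < Ln" using pos[OF v] by auto
  have uv: "?u \<noteq> v"
  proof
    assume "?u = v"
    hence "ot k \<in> v" using ku by simp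
    hence "k = pv v \<or> k = qv v" using pos(3)[OF v k(1)] by simp
    thus False using k(2) pq by auto
  qed
  obtain r where r: "r < Ln" "r \<noteq> k" "ot r \<in> ?u" "\<forall>i<Ln. ot i \<in> ?u \<longleftrightarrow> i = k \<or> i = r"
     "s (ot k) \<in> {ot r, s (s (ot r))}" "s (s (s (ot k))) \<in> {ot r, s (s (ot r))}"
    using other_pos[OF u k(1) ku] by blast
  have pu: "pv ?u = k \<or> pv ?u = r" using r(4) pv_in[OF u] pos_lt[OF u] by blast
  have qu: "qv ?u = k \<or> qv ?u = r" using r(4) qv_in[OF u] pos_lt[OF u] by blast
  have puq: "pv ?u < qv ?u" using pos[OF u] by simp
  have rd: "r \<noteq> pv v" "r \<noteq> qv v"
    using V_distinct[OF v u] uv r(3) pv_in[OF v] qv_in[OF v] by metis+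
  have rout: "r < pv v \<or> qv v < r"
  proof (rule ccontr)
    assume "\<not> (r < pv v \<or> qv v < r)"
    hence rin: "pv v < r" "r < qv v" using rd by auto
    show False
    proof (cases "k < pv v")
      case True
      hence "pv ?u = k" "qv ?u = r" using pu qu puq rin by auto
      thus False using nonint(2)[OF v nv u uv] True rin by simp
    next
      case False
      hence kq: "qv v < k" using k(2) by simp
      hence "pv ?u = r" "qv ?u = k" using pu qu puq rin by auto
      thus False using nonint(1)[OF v nv u uv] kq rin by simp
    qed
  qed
  show "s (ot k) \<notin> K v" "s (s (s (ot k))) \<notin> K v"
    using r(5,6) outside_K[OF v r(1) rout] by auto
qed

lemma outside_Y:
  assumes v: "v \<in> V" and nv: "nug v" and j: "j < Ln" "\<not> (pv v \<le> j \<and> j < qv v)"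
  shows "ot j \<notin> Yw v \<and> a (ot j) \<notin> Yw v"
proof -
  let ?Y = "Yw v" and ?p = "pv v" and ?q = "qv v"
  let ?x = "ot ?p"
  have Y: "?Y \<in> P" using Yw[OF v] by auto
  have pq: "?p < ?q" "?q < Ln" using pos[OF v] by auto
  have x: "?x \<in> Dt" by (rule ot_Dt)
  have dx: "distinct [?x, s ?x, s (s ?x), s (s (s ?x))]" using s4(2)[OF x] .
  have s4x: "s (s (s (s ?x))) = ?x" using s4(1)[OF x] .
  have ve: "v = {?x, s ?x, s (s ?x), s (s (s ?x))}" using v_eq_vx[OF v] vx_eq[OF x] by simp
  have xin: "?x \<in> v" "s ?x \<in> v" "s (s ?x) \<in> v" "s (s (s ?x)) \<in> v" using ve by auto
  have gx: "gw v = ?x \<or> gw v = s ?x" by (rule gw_cases[OF v])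
  have bq: "ot ?q \<notin> ?Y \<and> a (ot ?q) \<notin> ?Y"
  proof (cases "ot ?q = s ?x")
    case True
    hence g: "gw v = ?x" unfolding gw_def by simp
    have "ot ?q \<notin> ?Y" using Yw_v[OF v qv_in[OF v]] g True dx by auto
    moreover have "s (ot ?q) \<notin> ?Y" using Yw_v[OF v xin(3)] g True dx by auto
    ultimately show ?thesis using P_aS[OF Y ot_Dt] by simp
  next
    case False
    hence y: "ot ?q = s (s (s ?x))" using qv_rel[OF v] by simp
    hence g: "gw v = s ?x" unfolding gw_def using False by simp
    have "ot ?q \<notin> ?Y" using Yw_v[OF v qv_in[OF v]] g y dx by auto
    moreover have "s (ot ?q) \<notin> ?Y" using Yw_v[OF v xin(1)] g y dx s4x by auto
    ultimately show ?thesis using P_aS[OF Y ot_Dt] by simp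
  qed
  have up: "\<forall>n. ?q + n < Ln \<longrightarrow> ot (?q + n) \<notin> ?Y \<and> a (ot (?q + n)) \<notin> ?Y"
  proof (intro allI)
    fix n show "?q + n < Ln \<longrightarrow> ot (?q + n) \<notin> ?Y \<and> a (ot (?q + n)) \<notin> ?Y"
    proof (induction n)
      case 0 thus ?case using bq by simp
    next
      case (Suc n)
      show ?case
      proof
        assume lt: "?q + Suc n < Ln"
        let ?i = "?q + n"
        have i1: "Suc ?i < Ln" using lt by simp
        have i2: "\<not> (?p \<le> ?i \<and> ?i < ?q)" by simp
        have i3: "\<not> (?p \<le> Suc ?i \<and> Suc ?i < ?q)" by simp
        have c: "s (ot (Suc ?i)) \<notin> K v" "s (s (s (ot (Suc ?i)))) \<notin> K v"
          using cross_out[OF v nv i1] by auto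
        have IH: "ot ?i \<notin> ?Y \<and> a (ot ?i) \<notin> ?Y" using Suc lt by simp
        show "ot (?q + Suc n) \<notin> ?Y \<and> a (ot (?q + Suc n)) \<notin> ?Y"
          using step_eq[OF v i1 i2 i3 c] IH by simp
      qed
    qed
  qed
  have down: "\<forall>n. n < ?p \<longrightarrow> ot (?p - Suc n) \<notin> ?Y \<and> a (ot (?p - Suc n)) \<notin> ?Y"
  proof (intro allI)
    fix n show "n < ?p \<longrightarrow> ot (?p - Suc n) \<notin> ?Y \<and> a (ot (?p - Suc n)) \<notin> ?Y"
    proof (induction n)
      case 0
      show ?case
      proof
        assume p0: "0 < ?p"
        have pl: "?p < Ln" using pq by simp
        have a2: "a (ot (?p - 1)) = s (s ?x)"
          using a_ot[of "?p - 1"] nxt_Suc[of "?p - 1"] p0 pl by simp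
        have g2: "s (s ?x) \<noteq> gw v" "s (s (s ?x)) \<noteq> gw v" using gx dx by auto
        have n1: "a (ot (?p - 1)) \<notin> ?Y" using a2 Yw_v[OF v xin(3)] g2 by simp
        have "(ot (?p - 1) \<in> ?Y) = (s (s (s ?x)) \<in> ?Y)"
          using P_cl[OF Y ot_Dt[of "?p - 1"]] a2 by simp
        hence n2: "ot (?p - 1) \<notin> ?Y" using Yw_v[OF v xin(4)] g2 by simp
        show "ot (?p - Suc 0) \<notin> ?Y \<and> a (ot (?p - Suc 0)) \<notin> ?Y" using n1 n2 by simp
      qed
    next
      case (Suc n)
      show ?case
      proof
        assume lt: "Suc n < ?p"
        let ?i = "?p - Suc (Suc n)"
        have e: "Suc ?i = ?p - Suc n" using lt by simp
        have i1: "Suc ?i < Ln" using lt pq e by simp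
        have "?i < ?p" using lt by simp
        hence i2: "\<not> (?p \<le> ?i \<and> ?i < ?q)" by simp
        have "Suc ?i < ?p" using lt e by simp
        hence i3: "\<not> (?p \<le> Suc ?i \<and> Suc ?i < ?q)" by simp
        have k: "Suc ?i < ?p \<or> ?q < Suc ?i" using lt e by simp
        have c: "s (ot (Suc ?i)) \<notin> K v" "s (s (s (ot (Suc ?i)))) \<notin> K v"
          using cross_out[OF v nv i1 k] by auto
        have IH: "ot (Suc ?i) \<notin> ?Y \<and> a (ot (Suc ?i)) \<notin> ?Y" using Suc lt e by simp
        show "ot (?p - Suc (Suc n)) \<notin> ?Y \<and> a (ot (?p - Suc (Suc n))) \<notin> ?Y"
          using step_eq[OF v i1 i2 i3 c] IH by simp
      qed
    qed
  qed
  show ?thesis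
  proof (cases "j < ?p")
    case True
    thus ?thesis using down[rule_format, of "?p - Suc j"] by simp
  next
    case False
    hence "?q \<le> j" using j(2) by simp
    thus ?thesis using up[rule_format, of "j - ?q"] j(1) by simp
  qed
qed

lemma nested:
  assumes v: "v \<in> V" and nv: "nug v" and u: "u \<in> V" and uv: "u \<noteq> v"
    and h: "s (gw u) \<in> Yw v"
  shows "pv v < pv u \<and> qv u < qv v"
proof -
  let ?p = "pv u" and ?q = "qv u"
  have pq: "?p < ?q" "?q < Ln" "?p < Ln" using pos[OF u] pos_lt[OF u] by auto
  have d: "pv u \<noteq> pv v" "pv u \<noteq> qv v" "qv u \<noteq> pv v" "qv u \<noteq> qv v"
    using pos_distinct[OF v u uv] by auto
  have some_in: "(pv v < ?p \<and> ?p < qv v) \<or> (pv v < ?q \<and> ?q < qv v)"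
  proof (rule ccontr)
    assume "\<not> ?thesis"
    hence op: "?p < pv v \<or> qv v < ?p" "?q < pv v \<or> qv v < ?q" using d by auto
    have ue: "u = {ot ?p, s (s (ot ?p)), ot ?q, s (s (ot ?q))}" using v4(1)[OF u] .
    have sg: "s (gw u) \<in> u" using gw_in[OF u] mem_V[OF u gw_in[OF u]] S.f_in_orbit S.self_in by metis
    have n1: "ot ?p \<notin> Yw v" using outside_Y[OF v nv pq(3)] op(1) by auto
    have n2: "ot ?q \<notin> Yw v" using outside_Y[OF v nv pq(2)] op(2) by auto
    have "\<not> (pv v \<le> prv ?p \<and> prv ?p < qv v)" using op(1) pos[OF v] pq unfolding prv_def by auto
    hence n3: "s (s (ot ?p)) \<notin> Yw v" using outside_Y[OF v nv prv_lt[OF pq(3)]] s2_ot[OF pq(3)] by auto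
    have "\<not> (pv v \<le> prv ?q \<and> prv ?q < qv v)" using op(2) pos[OF v] pq unfolding prv_def by auto
    hence n4: "s (s (ot ?q)) \<notin> Yw v" using outside_Y[OF v nv prv_lt[OF pq(2)]] s2_ot[OF pq(2)] by auto
    have "s (gw u) \<in> {ot ?p, s (s (ot ?p)), ot ?q, s (s (ot ?q))}"
      by (rule subst[OF ue, of "\<lambda>X. s (gw u) \<in> X"]) (rule sg)
    thus False using n1 n2 n3 n4 h by auto
  qed
  show ?thesis
  proof (cases "pv v < ?p \<and> ?p < qv v")
    case True
    hence "\<not> qv v < ?q" using nonint(1)[OF v nv u uv] by auto
    thus ?thesis using True d by auto
  next
    case False
    hence i: "pv v < ?q" "?q < qv v" using some_in by auto
    hence "\<not> ?p < pv v" using nonint(2)[OF v nv u uv] by auto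
    thus ?thesis using i d by auto
  qed
qed

end


lemma parity_filter:
  assumes "finite S"
  shows "odd (card {v\<in>S. A v \<noteq> B v}) = (odd (card {v\<in>S. A v}) \<noteq> odd (card {v\<in>S. B v}))"
proof -
  have "{v\<in>S. A v \<noteq> B v} = xs {v\<in>S. A v} {v\<in>S. B v}" by auto
  thus ?thesis using card_xs_parity[of "{v\<in>S. A v}" "{v\<in>S. B v}"] assms by simp
qed

context knot
begin

definition Sof where "Sof U = {v \<in> V. nug v \<and> s (gw v) \<in> U}"
definition bigx where "bigx S = {d \<in> Dt. odd (card {v \<in> S. d \<in> Yw v})}"
definition Wm where "Wm U = xs U (bigx (Sof U))"

lemma Sof_sub: "Sof U \<subseteq> V" unfolding Sof_def by auto
lemma Sof_lin: "Sof (xs U U') = xs (Sof U) (Sof U')" unfolding Sof_def by auto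

lemma fin_sub_V: "S \<subseteq> V \<Longrightarrow> finite S" using V_finite finite_subset by blast

lemma bigx_P: assumes S: "S \<subseteq> V" shows "bigx S \<in> P"
proof -
  have "(s \<circ> a) ` bigx S \<subseteq> bigx S"
  proof
    fix e assume "e \<in> (s \<circ> a) ` bigx S"
    then obtain d where d: "d \<in> bigx S" "e = s (a d)" by auto
    have dD: "d \<in> Dt" using d unfolding bigx_def by auto
    have "{v \<in> S. e \<in> Yw v} = {v \<in> S. d \<in> Yw v}"
      using P_cl[OF Yw(1) dD] S d(2) by auto
    thus "e \<in> bigx S" using d dD s_in a_in unfolding bigx_def by auto
  qed
  thus ?thesis unfolding P_def bigx_def by auto
qed

lemma bigx_lin:
  assumes S: "S \<subseteq> V" and T: "T \<subseteq> V"
  shows "bigx (xs S T) = xs (bigx S) (bigx T)"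
proof -
  have key2: "odd (card {v \<in> xs S T. d \<in> Yw v}) = (odd (card {v \<in> S. d \<in> Yw v}) \<noteq> odd (card {v \<in> T. d \<in> Yw v}))" for d
  proof -
    have "{v \<in> xs S T. d \<in> Yw v} = xs {v \<in> S. d \<in> Yw v} {v \<in> T. d \<in> Yw v}" by auto
    thus "odd (card {v \<in> xs S T. d \<in> Yw v}) = (odd (card {v \<in> S. d \<in> Yw v}) \<noteq> odd (card {v \<in> T. d \<in> Yw v}))"
      using card_xs_parity[of "{v \<in> S. d \<in> Yw v}" "{v \<in> T. d \<in> Yw v}"] fin_sub_V[OF S] fin_sub_V[OF T] by simp
  qed
  show ?thesis unfolding bigx_def
  proof (rule set_eqI)
    fix x show "x \<in> {d \<in> Dt. odd (card {v \<in> xs S T. d \<in> Yw v})} \<longleftrightarrow>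
      x \<in> xs {d \<in> Dt. odd (card {v \<in> S. d \<in> Yw v})} {d \<in> Dt. odd (card {v \<in> T. d \<in> Yw v})}"
      unfolding key2 by auto
  qed
qed

lemma bigx_empty: "bigx {} = {}" unfolding bigx_def by simp

lemma Wm_lin: "Wm (xs U U') = xs (Wm U) (Wm U')"
  unfolding Wm_def Sof_lin bigx_lin[OF Sof_sub Sof_sub] by (auto simp: xs_def)

lemma Wm_P: "U \<in> P \<Longrightarrow> Wm U \<in> P"
  unfolding Wm_def using P_xs bigx_P[OF Sof_sub] by blast

lemma bnd_bigx:
  assumes S: "S \<subseteq> V" and d: "d \<in> Dt"
  shows "(d \<in> bnd (bigx S)) = odd (card {v \<in> S. d \<in> K v})"
proof -
  have "(d \<in> bnd (bigx S)) = (odd (card {v \<in> S. d \<in> Yw v}) \<noteq> odd (card {v \<in> S. a d \<in> Yw v}))"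
    unfolding bnd_def bigx_def using d a_in by auto
  also have "\<dots> = odd (card {v \<in> S. (d \<in> Yw v) \<noteq> (a d \<in> Yw v)})"
    using parity_filter[OF fin_sub_V[OF S]] by simp
  also have "{v \<in> S. (d \<in> Yw v) \<noteq> (a d \<in> Yw v)} = {v \<in> S. d \<in> K v}"
    using Yw(2) S d unfolding bnd_def by auto
  finally show ?thesis .
qed

lemma K_strand:
  assumes v: "v \<in> V" and j: "j < Ln"
  shows "((ot j \<in> K v) \<noteq> (ot (nxt j) \<in> K v)) = (ot (nxt j) \<in> v)"
proof -
  have pq: "pv v < qv v" "qv v < Ln" using pos[OF v] by auto
  have n: "nxt j < Ln" using nxt_lt[OF j] .
  show ?thesis
  proof (cases "Suc j = Ln")
    case True
    hence "nxt j = 0" unfolding nxt_def by simp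
    thus ?thesis using K_ot[OF v j] K_ot[OF v n] pos(3)[OF v n] pq True by auto
  next
    case False
    hence "nxt j = Suc j" unfolding nxt_def by simp
    thus ?thesis using K_ot[OF v j] K_ot[OF v n] pos(3)[OF v n] pq by auto
  qed
qed

lemma bnd_strand:
  assumes U: "U \<in> P" and j: "j < Ln"
  shows "((ot j \<in> bnd U) \<noteq> (ot (nxt j) \<in> bnd U)) = odd (card (vx (ot (nxt j)) \<inter> U))"
proof -
  let ?e = "ot (nxt j)"
  have e: "?e \<in> Dt" by (rule ot_Dt)
  have es: "s ?e \<in> Dt" "s (s ?e) \<in> Dt" "s (s (s ?e)) \<in> Dt" using s_in e by auto
  have a2: "a (ot j) = s (s ?e)" by (rule a_ot)
  have b1: "(ot j \<in> bnd U) = ((s (s (s ?e)) \<in> U) \<noteq> (s (s ?e) \<in> U))"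
    using P_cl[OF U ot_Dt[of j]] a2 ot_Dt unfolding bnd_def by auto
  have b2: "(?e \<in> bnd U) = ((?e \<in> U) \<noteq> (s ?e \<in> U))"
    using P_aS[OF U e] e unfolding bnd_def by auto
  have "card (vx ?e \<inter> U) = card ({?e, s ?e, s (s ?e), s (s (s ?e))} \<inter> U)"
    using vx_eq[OF e] by simp
  also have "\<dots> = of_bool (?e \<in> U) + of_bool (s ?e \<in> U) + of_bool (s (s ?e) \<in> U) + of_bool (s (s (s ?e)) \<in> U)"
    by (rule card4[OF s4(2)[OF e]])
  finally have c: "card (vx ?e \<inter> U) = \<dots>" .
  show ?thesis unfolding b1 b2 c by (cases "?e \<in> U"; cases "s ?e \<in> U"; cases "s (s ?e) \<in> U"; cases "s (s (s ?e)) \<in> U") auto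
qed

lemma ker_parity:
  assumes U: "U \<in> P" "tau U = {}" and w: "w \<in> V"
  shows "odd (card (w \<inter> U)) = (w \<in> Sof U)"
  using tau_formula[OF U(1) w] U(2) w unfolding Sof_def by auto

lemma Wm_const:
  assumes U: "U \<in> P" "tau U = {}" and j: "j < Ln"
  shows "(ot j \<in> bnd (Wm U)) = (ot (nxt j) \<in> bnd (Wm U))"
proof -
  let ?S = "Sof U" and ?e = "ot (nxt j)"
  let ?u = "vx ?e"
  have u: "?u \<in> V" using vx_in[OF ot_Dt] .
  have c1: "((ot j \<in> bnd U) \<noteq> (?e \<in> bnd U)) = (?u \<in> ?S)"
    using bnd_strand[OF U(1) j] ker_parity[OF U u] by simp
  have "((ot j \<in> bnd (bigx ?S)) \<noteq> (?e \<in> bnd (bigx ?S))) =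
        (odd (card {v \<in> ?S. ot j \<in> K v}) \<noteq> odd (card {v \<in> ?S. ?e \<in> K v}))"
    using bnd_bigx[OF Sof_sub ot_Dt] by simp
  also have "\<dots> = odd (card {v \<in> ?S. (ot j \<in> K v) \<noteq> (?e \<in> K v)})"
    using parity_filter[OF fin_sub_V[OF Sof_sub]] by simp
  also have "{v \<in> ?S. (ot j \<in> K v) \<noteq> (?e \<in> K v)} = {v \<in> ?S. ?e \<in> v}"
    using K_strand[OF _ j] Sof_sub by blast
  also have "{v \<in> ?S. ?e \<in> v} = (if ?u \<in> ?S then {?u} else {})"
    using mem_V Sof_sub S.self_in by auto
  finally have c2: "((ot j \<in> bnd (bigx ?S)) \<noteq> (?e \<in> bnd (bigx ?S))) = (?u \<in> ?S)" by simp
  show ?thesis unfolding Wm_def bnd_lin using c1 c2 by auto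
qed

lemma Wm_Q:
  assumes U: "U \<in> P" "tau U = {}"
  shows "bnd (Wm U) = {} \<or> bnd (Wm U) = Dt"
proof -
  let ?B = "bnd (Wm U)"
  have all: "\<forall>j<Ln. (ot j \<in> ?B) = (ot 0 \<in> ?B)"
  proof (intro allI)
    fix j show "j < Ln \<longrightarrow> (ot j \<in> ?B) = (ot 0 \<in> ?B)"
    proof (induction j)
      case (Suc j)
      show ?case
      proof
        assume lt: "Suc j < Ln"
        have "(ot j \<in> ?B) = (ot (nxt j) \<in> ?B)" using Wm_const[OF U] lt by simp
        thus "(ot (Suc j) \<in> ?B) = (ot 0 \<in> ?B)" using Suc lt nxt_Suc[OF lt] by simp
      qed
    qed simp
  qed
  have Bsub: "?B \<subseteq> Dt" unfolding bnd_def by auto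
  have acl: "a ` ?B \<subseteq> ?B" using bnd_A1[of "Wm U"] unfolding A1_def by blast
  have Ba: "\<And>d. d \<in> Dt \<Longrightarrow> (a d \<in> ?B) = (d \<in> ?B)"
    using A.closed_iff[OF acl] by blast
  show ?thesis
  proof (cases "ot 0 \<in> ?B")
    case True
    have "Dt \<subseteq> ?B"
    proof
      fix d assume d: "d \<in> Dt"
      show "d \<in> ?B"
        using dart_cases[OF d] all True Ba[OF ot_Dt] by auto
    qed
    thus ?thesis using Bsub by auto
  next
    case False
    have "?B = {}"
    proof (rule ccontr)
      assume "?B \<noteq> {}"
      then obtain d where d: "d \<in> ?B" by auto
      hence dD: "d \<in> Dt" using Bsub by auto
      show False using dart_cases[OF dD] all False Ba[OF ot_Dt] d by auto
    qed
    thus ?thesis by simp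
  qed
qed

lemma core:
  assumes U: "U \<in> P" and eq: "U = bigx (Sof U)"
  shows "U = {}"
proof (cases "Sof U = {}")
  case True thus ?thesis using eq bigx_empty by simp
next
  case False
  let ?S = "Sof U"
  have fS: "finite ?S" using fin_sub_V[OF Sof_sub] .
  let ?m = "Max ((\<lambda>v. qv v - pv v) ` ?S)"
  have "?m \<in> (\<lambda>v. qv v - pv v) ` ?S" by (rule Max_in) (use fS False in auto)
  then obtain u where u: "u \<in> ?S" "qv u - pv u = ?m" by auto
  have mx: "\<And>v. v \<in> ?S \<Longrightarrow> qv v - pv v \<le> ?m" using fS by simp
  have uV: "u \<in> V" and nu: "nug u" and su: "s (gw u) \<in> U" using u(1) unfolding Sof_def by auto
  have "s (gw u) \<in> bigx ?S" using su eq by simp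
  hence "odd (card {v \<in> ?S. s (gw u) \<in> Yw v})" unfolding bigx_def by auto
  hence "{v \<in> ?S. s (gw u) \<in> Yw v} \<noteq> {}" by (metis card.empty odd_card_imp_not_empty)
  then obtain v where v: "v \<in> ?S" "s (gw u) \<in> Yw v" by auto
  have vV: "v \<in> V" and nv: "nug v" using v(1) unfolding Sof_def by auto
  have uv: "u \<noteq> v" using v(2) Yw_only(1)[OF uV] by auto
  have "pv v < pv u \<and> qv u < qv v" using nested[OF vV nv uV uv v(2)] .
  moreover have "pv u < qv u" using pos(1)[OF uV] .
  ultimately have "qv u - pv u < qv v - pv v" by arith
  thus ?thesis using mx[OF v(1)] u(2) by simp
qed

lemma tau_lin:
  assumes Y: "Y \<in> P" and Z: "Z \<in> P"
  shows "tau (xs Y Z) = xs (tau Y) (tau Z)"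
proof -
  have YZ: "xs Y Z \<in> P" using P_xs[OF Y Z] .
  have sub: "\<And>X F. X \<in> P \<Longrightarrow> F \<in> R \<Longrightarrow> (F \<subseteq> X) = (\<exists>x\<in>Dt. F = fc x \<and> x \<in> X)"
  proof -
    fix X F assume X: "X \<in> P" and F: "F \<in> R"
    then obtain x where x: "x \<in> Dt" "F = fc x" unfolding regions_def by auto
    have cl: "(s \<circ> a) ` X \<subseteq> X" using X unfolding P_def by auto
    have "(F \<subseteq> X) = (x \<in> X)" using F.closed_orbit[OF cl, of x] F.self_in[of x] x(2) by auto
    moreover have "(\<exists>y\<in>Dt. F = fc y \<and> y \<in> X) = (x \<in> X)"
      using P_face[OF X] x by (metis F.orbit_eq F.self_in)
    ultimately show "(F \<subseteq> X) = (\<exists>x\<in>Dt. F = fc x \<and> x \<in> X)" by simp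
  qed
  have key: "(F \<subseteq> xs Y Z) = ((F \<subseteq> Y) \<noteq> (F \<subseteq> Z))" if F: "F \<in> R" for F
  proof -
    obtain x where x: "x \<in> Dt" "F = fc x" using F unfolding regions_def by auto
    have e: "\<And>X. X \<in> P \<Longrightarrow> (F \<subseteq> X) = (x \<in> X)"
      using sub[OF _ F] P_face x by (metis F.orbit_eq F.self_in)
    show ?thesis using e[OF YZ] e[OF Y] e[OF Z] by simp
  qed
  have key3: "odd (card {F \<in> R. F \<subseteq> xs Y Z \<and> v \<inter> F \<noteq> {}}) =
      (odd (card {F \<in> R. F \<subseteq> Y \<and> v \<inter> F \<noteq> {}}) \<noteq> odd (card {F \<in> R. F \<subseteq> Z \<and> v \<inter> F \<noteq> {}}))" for v
  proof -
    have "{F \<in> R. F \<subseteq> xs Y Z \<and> v \<inter> F \<noteq> {}} = xs {F \<in> R. F \<subseteq> Y \<and> v \<inter> F \<noteq> {}} {F \<in> R. F \<subseteq> Z \<and> v \<inter> F \<noteq> {}}"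
    proof (rule set_eqI)
      fix F show "F \<in> {F \<in> R. F \<subseteq> xs Y Z \<and> v \<inter> F \<noteq> {}} \<longleftrightarrow> F \<in> xs {F \<in> R. F \<subseteq> Y \<and> v \<inter> F \<noteq> {}} {F \<in> R. F \<subseteq> Z \<and> v \<inter> F \<noteq> {}}"
        by (cases "F \<in> R") (simp_all only: key xs_iff mem_Collect_eq, auto)
    qed
    thus ?thesis
      using card_xs_parity[of "{F \<in> R. F \<subseteq> Y \<and> v \<inter> F \<noteq> {}}" "{F \<in> R. F \<subseteq> Z \<and> v \<inter> F \<noteq> {}}"] R_finite by simp
  qed
  show ?thesis unfolding tau_def
  proof (rule set_eqI)
    fix x show "x \<in> {v \<in> V. odd (card {F \<in> R. F \<subseteq> xs Y Z \<and> v \<inter> F \<noteq> {}})} \<longleftrightarrow>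
      x \<in> xs {v \<in> V. odd (card {F \<in> R. F \<subseteq> Y \<and> v \<inter> F \<noteq> {}})} {v \<in> V. odd (card {F \<in> R. F \<subseteq> Z \<and> v \<inter> F \<noteq> {}})}"
      unfolding key3 by auto
  qed
qed

lemma kerT_card: "card {U \<in> P. tau U = {}} \<le> 4"
proof -
  let ?kT = "{U \<in> P. tau U = {}}"
  let ?Q = "{Z \<in> P. bnd Z \<in> {{}, Dt}}"
  have inj: "inj_on Wm ?kT"
  proof (rule inj_onI)
    fix U1 U2 assume U1: "U1 \<in> ?kT" and U2: "U2 \<in> ?kT" and eq: "Wm U1 = Wm U2"
    let ?D = "xs U1 U2"
    have D: "?D \<in> P" using P_xs U1 U2 by auto
    have "Wm ?D = {}" using Wm_lin eq by simp
    hence "?D = bigx (Sof ?D)" unfolding Wm_def by (auto simp: xs_def)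
    hence "?D = {}" using core[OF D] by simp
    thus "U1 = U2" by (auto simp: xs_def)
  qed
  have img: "Wm ` ?kT \<subseteq> ?Q" using Wm_P Wm_Q by auto
  have "card ?kT \<le> card ?Q"
    using card_inj_on_le[OF inj img] P_fin by simp
  also have "\<dots> \<le> card {{}, Dt} * card {Z \<in> P. bnd Z = {}}"
    using preimage_card[OF P_fin P_xs bnd_lin, of "{{}, Dt}"] by simp
  also have "\<dots> \<le> 2 * 2"
  proof (rule mult_le_mono)
    show "card {{}, Dt} \<le> 2" by (simp add: card_insert_if)
    have "{Z \<in> P. bnd Z = {}} \<subseteq> {{}, Dt}" using bnd_ker by auto
    hence "card {Z \<in> P. bnd Z = {}} \<le> card {{}, Dt}" by (intro card_mono) auto
    also have "\<dots> \<le> 2" by (simp add: card_insert_if)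
    finally show "card {Z \<in> P. bnd Z = {}} \<le> 2" .
  qed
  finally show ?thesis by simp
qed

lemma tau_surj: "tau ` P = Pow V"
proof -
  have h: "card P = card (tau ` P) * card {U \<in> P. tau U = {}}"
    by (rule hom_card[OF P_fin P_xs tau_lin])
  have "2 ^ card R \<le> card (tau ` P) * 4"
    using h mult_le_mono2[OF kerT_card, of "card (tau ` P)"] P_card by simp
  hence "4 * 2 ^ card V \<le> card (tau ` P) * 4" using RV by (simp add: power_add)
  hence le: "2 ^ card V \<le> card (tau ` P)" by simp
  have sub: "tau ` P \<subseteq> Pow V" unfolding tau_def by auto
  have cP: "card (Pow V) = 2 ^ card V" using V_finite by (simp add: card_Pow)
  have fP: "finite (Pow V)" using V_finite by simp
  have "card (tau ` P) \<le> card (Pow V)" using card_mono[OF fP sub] .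
  hence "card (tau ` P) = card (Pow V)" using le cP by simp
  thus ?thesis using card_subset_eq[OF fP sub] by simp
qed

end


lemma fold_freeze:
  "fold (region_freeze_cc s Dt) rs ov =
     (\<lambda>v. if v \<in> crossings s Dt \<and> odd (length (filter (\<lambda>r. \<not> touches v r) rs)) then \<not> ov v else ov v)"
proof (induction rs arbitrary: ov)
  case Nil thus ?case by simp
next
  case (Cons r rs)
  show ?case
    by (simp only: fold_Cons comp_apply Cons.IH) (auto simp: region_freeze_cc_def fun_eq_iff)
qed

lemma fold_cc:
  "fold (region_cc s Dt) rs ov =
     (\<lambda>v. if v \<in> crossings s Dt \<and> odd (length (filter (\<lambda>r. touches v r) rs)) then \<not> ov v else ov v)"
proof (induction rs arbitrary: ov)
  case Nil thus ?case by simp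
next
  case (Cons r rs)
  show ?case
    by (simp only: fold_Cons comp_apply Cons.IH) (auto simp: region_cc_def fun_eq_iff)
qed

theorem theorem3p4:
  fixes Dt :: "'d set" and s a :: "'d \<Rightarrow> 'd" and ov :: "'d set \<Rightarrow> bool"
  assumes "knot_projection Dt s a"
    and "\<exists>Rs. ineffective Dt s a ov Rs \<and> odd (card Rs)"
    and "c \<in> crossings s Dt"
  shows "\<exists>rs. set rs \<subseteq> regions s a Dt \<and>
           fold (region_freeze_cc s Dt) rs ov = crossing_change c ov"
proof -
  interpret knot Dt s a by unfold_locales (rule assms(1))
  obtain Rs where Rs: "ineffective Dt s a ov Rs" "odd (card Rs)" using assms(2) by blast
  have RsR: "Rs \<subseteq> R" using Rs(1) unfolding ineffective_def by auto
  have fRs: "finite Rs" using RsR R_finite finite_subset by blast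
  obtain rl where rl: "set rl = Rs" "distinct rl" using finite_distinct_list[OF fRs] by blast
  have "fold (region_cc s Dt) rl ov = ov" using Rs(1) rl unfolding ineffective_def by auto
  hence ev: "even (length (filter (\<lambda>r. touches v r) rl))" if v: "v \<in> V" for v
    using fun_cong[of _ _ v] v unfolding fold_cc by (metis (mono_tags, lifting))
  have lrl: "length rl = card Rs" using distinct_card[OF rl(2)] rl(1) by simp
  have "{c} \<in> tau ` P" using tau_surj assms(3) by auto
  then obtain U where U: "U \<in> P" "tau U = {c}" by auto
  let ?FU = "{F \<in> R. F \<subseteq> U}"
  have fFU: "finite ?FU" using R_finite by simp
  obtain ul where ul: "set ul = ?FU" "distinct ul" using finite_distinct_list[OF fFU] by blast
  have tu: "odd (length (filter (\<lambda>r. touches v r) ul)) = (v = c)" if v: "v \<in> V" for v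
  proof -
    have "length (filter (\<lambda>r. touches v r) ul) = card ({r. touches v r} \<inter> ?FU)"
      using distinct_length_filter[OF ul(2)] ul(1) by simp
    also have "{r. touches v r} \<inter> ?FU = {F \<in> R. F \<subseteq> U \<and> v \<inter> F \<noteq> {}}"
      unfolding touches_def by auto
    finally have "length (filter (\<lambda>r. touches v r) ul) = card {F \<in> R. F \<subseteq> U \<and> v \<inter> F \<noteq> {}}" .
    moreover have "(v \<in> tau U) = odd (card {F \<in> R. F \<subseteq> U \<and> v \<inter> F \<noteq> {}})"
      using v unfolding tau_def by simp
    ultimately show ?thesis using U(2) by simp
  qed
  define rs where "rs = (if even (length ul) then ul else ul @ rl)"
  have setrs: "set rs \<subseteq> R" unfolding rs_def using ul(1) rl(1) RsR by auto
  have evrs: "even (length rs)" unfolding rs_def using lrl Rs(2) by auto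
  have tr: "odd (length (filter (\<lambda>r. touches v r) rs)) = (v = c)" if v: "v \<in> V" for v
    unfolding rs_def using tu[OF v] ev[OF v] by auto
  have fr: "odd (length (filter (\<lambda>r. \<not> touches v r) rs)) = (v = c)" if v: "v \<in> V" for v
  proof -
    have "length (filter (\<lambda>r. touches v r) rs) + length (filter (\<lambda>r. \<not> touches v r) rs) = length rs"
      by (rule sum_length_filter_compl)
    hence "odd (length (filter (\<lambda>r. \<not> touches v r) rs)) = odd (length (filter (\<lambda>r. touches v r) rs))"
      using evrs by (metis even_add)
    thus ?thesis using tr[OF v] by simp
  qed
  have "fold (region_freeze_cc s Dt) rs ov = crossing_change c ov"
    unfolding fold_freeze crossing_change_def
  proof
    fix v
    show "(if v \<in> V \<and> odd (length (filter (\<lambda>r. \<not> touches v r) rs)) then \<not> ov v else ov v) = (ov(c := \<not> ov c)) v"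
      using fr assms(3) by (cases "v \<in> V") auto
  qed
  thus ?thesis using setrs by blast
qed


end
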